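(* Let $F:\mathcal C\to\mathcal D$ be a pseudofunctor of bicategories. Then every extended formal diagram for $F$ commutes. Equivalently, for every map of graphs $H:G\to M$, every hom-category of the bicategory $\mathcal M(H)$ is thin.
   Context: Let $\mathbf{Pseudo}_1$ be the category of pseudofunctors $F:\mathcal C\to\mathcal D$ of bicategories with morphisms pairs of strict functors forming strictly commuting squares. The functor from $\mathbf{Pseudo}_1$ to the arrow category of directed graphs sending $F$ to the graph map $UF:U\mathcal C\to U\mathcal D$ (where $U$ takes 0-cells and 1-cells) has a left adjoint, sending a graph map $H:G\to M$ to a pseudofunctor $\Phi_H:\mathcal F(G)\to\mathcal M(H)$, where $\mathcal F(G)$ is the free bicategory on $G$. Its universal property: for every pseudofunctor $F:\mathcal C\to\mathcal D$ and every strictly commuting square of graph maps $g:G\to U\mathcal C$, $h:M\to U\mathcal D$ with $UF\circ g=h\circ H$, there are unique strict functors $\mathcal F(G)\to\mathcal C$ and $\mathcal M(H)\to\mathcal D$ extending $g$ and $h$ such that the resulting square with $\Phi_H$ and $F$ commutes strictly. (Concretely, 1-cells of $\mathcal M(H)$ are parenthesized composable words in formal units, edges of $M$, and terms $\Phi_H(w)$ with $w$ a 1-cell of $\mathcal F(G)$, where a term $\Phi_H(X)$ for a single edge $X$ of $G$ is identified with the edge $H(X)$ of $M$.) An extended formal diagram for $F$ is a diagram in $\mathcal D$ which is the image of a diagram in $\mathcal M(H)$ under the strict functor $\mathcal M(H)\to\mathcal D$ arising from some such square. *)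

theory Defs
  imports Main
begin

record ('v,'e) graph =
  verts :: "'v set"
  arcs  :: "'e set"
  gsrc  :: "'e \<Rightarrow> 'v"
  gtgt  :: "'e \<Rightarrow> 'v"

definition wf_graph :: "('v,'e) graph \<Rightarrow> bool" where
  "wf_graph G \<longleftrightarrow> (\<forall>e\<in>arcs G. gsrc G e \<in> verts G \<and> gtgt G e \<in> verts G)"

definition graph_hom :: "('a,'b) graph \<Rightarrow> ('c,'d) graph \<Rightarrow> ('a \<Rightarrow> 'c) \<Rightarrow> ('b \<Rightarrow> 'd) \<Rightarrow> bool" where
  "graph_hom G M hv he \<longleftrightarrow>
     (\<forall>v\<in>verts G. hv v \<in> verts M) \<and>
     (\<forall>e\<in>arcs G. he e \<in> arcs M \<and> gsrc M (he e) = hv (gsrc G e) \<and> gtgt M (he e) = hv (gtgt G e))"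

section \<open>Bicategories presented by generating 1-cells, 2-cells and relations\<close>

text \<open>1-cells: parenthesized words of formal units and generating 1-cells.
  \<open>C g f\<close> is the horizontal composite "g after f" (source of f, target of g).\<close>
datatype ('v,'g) w1 = U 'v | G 'g | C "('v,'g) w1" "('v,'g) w1"

text \<open>2-cell terms: identities, vertical composite \<open>V \<beta> \<alpha>\<close> (\<open>\<alpha>\<close> first),
  horizontal composite \<open>H \<beta> \<alpha>\<close>, associators \<open>A h g f : (h g) f \<Rightarrow> h (g f)\<close>,
  left unitors \<open>L f : 1 f \<Rightarrow> f\<close>, right unitors \<open>R f : f 1 \<Rightarrow> f\<close>, their formal
  inverses, and generating 2-cells \<open>X x\<close>.\<close>
datatype ('v,'g,'x) c2 =
    Id "('v,'g) w1"
  | V "('v,'g,'x) c2" "('v,'g,'x) c2"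
  | H "('v,'g,'x) c2" "('v,'g,'x) c2"
  | A "('v,'g) w1" "('v,'g) w1" "('v,'g) w1"
  | Ai "('v,'g) w1" "('v,'g) w1" "('v,'g) w1"
  | L "('v,'g) w1" | Li "('v,'g) w1"
  | R "('v,'g) w1" | Ri "('v,'g) w1"
  | X 'x

record ('v,'g,'x) sig =
  sv  :: "'v set"
  sg  :: "'g set"
  sgs :: "'g \<Rightarrow> 'v"
  sgt :: "'g \<Rightarrow> 'v"
  sx  :: "'x set"
  sxd :: "'x \<Rightarrow> ('v,'g) w1"
  sxc :: "'x \<Rightarrow> ('v,'g) w1"

fun src1 :: "('v,'g,'x) sig \<Rightarrow> ('v,'g) w1 \<Rightarrow> 'v" where
  "src1 S (U v) = v"
| "src1 S (G g) = sgs S g"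
| "src1 S (C g f) = src1 S f"

fun tgt1 :: "('v,'g,'x) sig \<Rightarrow> ('v,'g) w1 \<Rightarrow> 'v" where
  "tgt1 S (U v) = v"
| "tgt1 S (G g) = sgt S g"
| "tgt1 S (C g f) = tgt1 S g"

fun ok1 :: "('v,'g,'x) sig \<Rightarrow> ('v,'g) w1 \<Rightarrow> bool" where
  "ok1 S (U v) = (v \<in> sv S)"
| "ok1 S (G g) = (g \<in> sg S)"
| "ok1 S (C g f) = (ok1 S g \<and> ok1 S f \<and> src1 S g = tgt1 S f)"

fun dom2 :: "('v,'g,'x) sig \<Rightarrow> ('v,'g,'x) c2 \<Rightarrow> ('v,'g) w1" where
  "dom2 S (Id f) = f"
| "dom2 S (V \<beta> \<alpha>) = dom2 S \<alpha>"
| "dom2 S (H \<beta> \<alpha>) = C (dom2 S \<beta>) (dom2 S \<alpha>)"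
| "dom2 S (A h g f) = C (C h g) f"
| "dom2 S (Ai h g f) = C h (C g f)"
| "dom2 S (L f) = C (U (tgt1 S f)) f"
| "dom2 S (Li f) = f"
| "dom2 S (R f) = C f (U (src1 S f))"
| "dom2 S (Ri f) = f"
| "dom2 S (X x) = sxd S x"

fun cod2 :: "('v,'g,'x) sig \<Rightarrow> ('v,'g,'x) c2 \<Rightarrow> ('v,'g) w1" where
  "cod2 S (Id f) = f"
| "cod2 S (V \<beta> \<alpha>) = cod2 S \<beta>"
| "cod2 S (H \<beta> \<alpha>) = C (cod2 S \<beta>) (cod2 S \<alpha>)"
| "cod2 S (A h g f) = C h (C g f)"
| "cod2 S (Ai h g f) = C (C h g) f"
| "cod2 S (L f) = f"
| "cod2 S (Li f) = C (U (tgt1 S f)) f"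
| "cod2 S (R f) = f"
| "cod2 S (Ri f) = C f (U (src1 S f))"
| "cod2 S (X x) = sxc S x"

fun ok2 :: "('v,'g,'x) sig \<Rightarrow> ('v,'g,'x) c2 \<Rightarrow> bool" where
  "ok2 S (Id f) = ok1 S f"
| "ok2 S (V \<beta> \<alpha>) = (ok2 S \<beta> \<and> ok2 S \<alpha> \<and> cod2 S \<alpha> = dom2 S \<beta>)"
| "ok2 S (H \<beta> \<alpha>) = (ok2 S \<beta> \<and> ok2 S \<alpha> \<and> src1 S (dom2 S \<beta>) = tgt1 S (dom2 S \<alpha>))"
| "ok2 S (A h g f) = (ok1 S h \<and> ok1 S g \<and> ok1 S f \<and> src1 S h = tgt1 S g \<and> src1 S g = tgt1 S f)"
| "ok2 S (Ai h g f) = (ok1 S h \<and> ok1 S g \<and> ok1 S f \<and> src1 S h = tgt1 S g \<and> src1 S g = tgt1 S f)"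
| "ok2 S (L f) = ok1 S f"
| "ok2 S (Li f) = ok1 S f"
| "ok2 S (R f) = ok1 S f"
| "ok2 S (Ri f) = ok1 S f"
| "ok2 S (X x) = (x \<in> sx S)"

text \<open>Only instances between well-formed parallel 2-cells are
  used (see \<open>beq\<close>).\<close>
inductive bax :: "('v,'g,'x) sig \<Rightarrow> ('v,'g,'x) c2 \<Rightarrow> ('v,'g,'x) c2 \<Rightarrow> bool" for S where
  idl: "bax S (V (Id (cod2 S \<alpha>)) \<alpha>) \<alpha>"
| idr: "bax S (V \<alpha> (Id (dom2 S \<alpha>))) \<alpha>"
| vassoc: "bax S (V (V \<gamma> \<beta>) \<alpha>) (V \<gamma> (V \<beta> \<alpha>))"
| hid: "bax S (H (Id g) (Id f)) (Id (C g f))"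
| interchange: "bax S (H (V \<beta>' \<beta>) (V \<alpha>' \<alpha>)) (V (H \<beta>' \<alpha>') (H \<beta> \<alpha>))"
| ainv1: "bax S (V (Ai h g f) (A h g f)) (Id (C (C h g) f))"
| ainv2: "bax S (V (A h g f) (Ai h g f)) (Id (C h (C g f)))"
| linv1: "bax S (V (Li f) (L f)) (Id (C (U (tgt1 S f)) f))"
| linv2: "bax S (V (L f) (Li f)) (Id f)"
| rinv1: "bax S (V (Ri f) (R f)) (Id (C f (U (src1 S f))))"
| rinv2: "bax S (V (R f) (Ri f)) (Id f)"
| anat: "bax S (V (A (cod2 S \<gamma>) (cod2 S \<beta>) (cod2 S \<alpha>)) (H (H \<gamma> \<beta>) \<alpha>))
               (V (H \<gamma> (H \<beta> \<alpha>)) (A (dom2 S \<gamma>) (dom2 S \<beta>) (dom2 S \<alpha>)))"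
| lnat: "bax S (V (L (cod2 S \<alpha>)) (H (Id (U (tgt1 S (cod2 S \<alpha>)))) \<alpha>)) (V \<alpha> (L (dom2 S \<alpha>)))"
| rnat: "bax S (V (R (cod2 S \<alpha>)) (H \<alpha> (Id (U (src1 S (cod2 S \<alpha>)))))) (V \<alpha> (R (dom2 S \<alpha>)))"
| pentagon: "bax S (V (A k h (C g f)) (A (C k h) g f))
                   (V (H (Id k) (A h g f)) (V (A k (C h g) f) (H (A k h g) (Id f))))"
| triangle: "bax S (V (H (Id g) (L f)) (A g (U (tgt1 S f)) f)) (H (R g) (Id f))"

inductive beq :: "('v,'g,'x) sig \<Rightarrow> (('v,'g,'x) c2 \<Rightarrow> ('v,'g,'x) c2 \<Rightarrow> bool)
                  \<Rightarrow> ('v,'g,'x) c2 \<Rightarrow> ('v,'g,'x) c2 \<Rightarrow> bool" for S Rel where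
  gen: "\<lbrakk>bax S \<alpha> \<beta> \<or> Rel \<alpha> \<beta>; ok2 S \<alpha>; ok2 S \<beta>; dom2 S \<alpha> = dom2 S \<beta>; cod2 S \<alpha> = cod2 S \<beta>\<rbrakk>
        \<Longrightarrow> beq S Rel \<alpha> \<beta>"
| refl: "ok2 S \<alpha> \<Longrightarrow> beq S Rel \<alpha> \<alpha>"
| sym: "beq S Rel \<alpha> \<beta> \<Longrightarrow> beq S Rel \<beta> \<alpha>"
| trans: "beq S Rel \<alpha> \<beta> \<Longrightarrow> beq S Rel \<beta> \<gamma> \<Longrightarrow> beq S Rel \<alpha> \<gamma>"
| congV: "beq S Rel \<beta> \<beta>' \<Longrightarrow> beq S Rel \<alpha> \<alpha>' \<Longrightarrow> ok2 S (V \<beta> \<alpha>) \<Longrightarrow> beq S Rel (V \<beta> \<alpha>) (V \<beta>' \<alpha>')"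
| congH: "beq S Rel \<beta> \<beta>' \<Longrightarrow> beq S Rel \<alpha> \<alpha>' \<Longrightarrow> ok2 S (H \<beta> \<alpha>) \<Longrightarrow> beq S Rel (H \<beta> \<alpha>) (H \<beta>' \<alpha>')"

definition hom_thin :: "('v,'g,'x) sig \<Rightarrow> (('v,'g,'x) c2 \<Rightarrow> ('v,'g,'x) c2 \<Rightarrow> bool) \<Rightarrow> bool" where
  "hom_thin S Rel \<longleftrightarrow>
     (\<forall>\<alpha> \<beta>. ok2 S \<alpha> \<and> ok2 S \<beta> \<and> dom2 S \<alpha> = dom2 S \<beta> \<and> cod2 S \<alpha> = cod2 S \<beta>
        \<longrightarrow> beq S Rel \<alpha> \<beta>)"

section \<open>The free bicategory F(G)\<close>

definition FS :: "('a,'b) graph \<Rightarrow> ('a,'b,unit) sig" where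
  "FS Gr = \<lparr>sv = verts Gr, sg = arcs Gr, sgs = gsrc Gr, sgt = gtgt Gr,
            sx = {}, sxd = (\<lambda>_. undefined), sxc = (\<lambda>_. undefined)\<rparr>"

abbreviation feq :: "('a,'b) graph \<Rightarrow> ('a,'b,unit) c2 \<Rightarrow> ('a,'b,unit) c2 \<Rightarrow> bool" where
  "feq Gr \<equiv> beq (FS Gr) (\<lambda>_ _. False)"

section \<open>The bicategory M(H) and the pseudofunctor \<open>\<Phi>_H : F(G) \<rightarrow> M(H)\<close>\<close>

text \<open>Generating 1-cells of M(H): edges of M (\<open>Inl\<close>) and \<open>\<Phi>(w)\<close> for 1-cells w of F(G)
  which are not single edges (\<open>Inr w\<close>); \<open>\<Phi>(X)\<close> for an edge X of G is identified with H(X).\<close>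
type_synonym ('a,'b,'c,'d) m1 = "('c, 'd + ('a,'b) w1) w1"

fun phi1 :: "('b \<Rightarrow> 'd) \<Rightarrow> ('a,'b) w1 \<Rightarrow> ('a,'b,'c,'d) m1" where
  "phi1 he (G e) = G (Inl (he e))"
| "phi1 he (U v) = G (Inr (U v))"
| "phi1 he (C g f) = G (Inr (C g f))"

text \<open>Generating 2-cells of M(H): \<open>\<Phi>(\<alpha>)\<close> for 2-cells of F(G), the compositors
  \<open>\<Phi>_{g,f} : \<Phi> g \<circ> \<Phi> f \<Rightarrow> \<Phi>(g f)\<close>, the unitors \<open>\<Phi>_a : 1_{H a} \<Rightarrow> \<Phi>(1_a)\<close>, and inverses.\<close>
datatype ('a,'b) mx =
    PhiMap "('a,'b,unit) c2"
  | PhiC "('a,'b) w1" "('a,'b) w1" | PhiCi "('a,'b) w1" "('a,'b) w1"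
  | PhiU 'a | PhiUi 'a

fun mxd :: "('a \<Rightarrow> 'c) \<Rightarrow> ('b \<Rightarrow> 'd) \<Rightarrow> ('a,'b) graph \<Rightarrow> ('a,'b) mx \<Rightarrow> ('a,'b,'c,'d) m1" where
  "mxd hv he Gr (PhiMap \<alpha>) = phi1 he (dom2 (FS Gr) \<alpha>)"
| "mxd hv he Gr (PhiC g f) = C (phi1 he g) (phi1 he f)"
| "mxd hv he Gr (PhiCi g f) = phi1 he (C g f)"
| "mxd hv he Gr (PhiU a) = U (hv a)"
| "mxd hv he Gr (PhiUi a) = phi1 he (U a)"

fun mxc :: "('a \<Rightarrow> 'c) \<Rightarrow> ('b \<Rightarrow> 'd) \<Rightarrow> ('a,'b) graph \<Rightarrow> ('a,'b) mx \<Rightarrow> ('a,'b,'c,'d) m1" where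
  "mxc hv he Gr (PhiMap \<alpha>) = phi1 he (cod2 (FS Gr) \<alpha>)"
| "mxc hv he Gr (PhiC g f) = phi1 he (C g f)"
| "mxc hv he Gr (PhiCi g f) = C (phi1 he g) (phi1 he f)"
| "mxc hv he Gr (PhiU a) = phi1 he (U a)"
| "mxc hv he Gr (PhiUi a) = U (hv a)"

definition MS :: "('a,'b) graph \<Rightarrow> ('c,'d) graph \<Rightarrow> ('a \<Rightarrow> 'c) \<Rightarrow> ('b \<Rightarrow> 'd)
                   \<Rightarrow> ('c, 'd + ('a,'b) w1, ('a,'b) mx) sig" where
  "MS Gr Mg hv he =
     \<lparr>sv = verts Mg,
      sg = Inl ` arcs Mg \<union> Inr ` {w. ok1 (FS Gr) w \<and> (\<forall>e. w \<noteq> G e)},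
      sgs = case_sum (gsrc Mg) (\<lambda>w. hv (src1 (FS Gr) w)),
      sgt = case_sum (gtgt Mg) (\<lambda>w. hv (tgt1 (FS Gr) w)),
      sx = {PhiMap \<alpha> | \<alpha>. ok2 (FS Gr) \<alpha>}
           \<union> {PhiC g f | g f. ok1 (FS Gr) g \<and> ok1 (FS Gr) f \<and> src1 (FS Gr) g = tgt1 (FS Gr) f}
           \<union> {PhiCi g f | g f. ok1 (FS Gr) g \<and> ok1 (FS Gr) f \<and> src1 (FS Gr) g = tgt1 (FS Gr) f}
           \<union> {PhiU a | a. a \<in> verts Gr} \<union> {PhiUi a | a. a \<in> verts Gr},
      sxd = mxd hv he Gr,
      sxc = mxc hv he Gr\<rparr>"

inductive mrel :: "('a,'b) graph \<Rightarrow> ('a \<Rightarrow> 'c) \<Rightarrow> ('b \<Rightarrow> 'd)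
                   \<Rightarrow> ('c, 'd + ('a,'b) w1, ('a,'b) mx) c2 \<Rightarrow> ('c, 'd + ('a,'b) w1, ('a,'b) mx) c2 \<Rightarrow> bool"
  for Gr hv he where
  resp: "feq Gr \<alpha> \<beta> \<Longrightarrow> mrel Gr hv he (X (PhiMap \<alpha>)) (X (PhiMap \<beta>))"
| fid: "mrel Gr hv he (X (PhiMap (Id w))) (Id (phi1 he w))"
| fcomp: "mrel Gr hv he (X (PhiMap (V \<beta> \<alpha>))) (V (X (PhiMap \<beta>)) (X (PhiMap \<alpha>)))"
| cnat: "mrel Gr hv he
           (V (X (PhiC (cod2 (FS Gr) \<beta>) (cod2 (FS Gr) \<alpha>))) (H (X (PhiMap \<beta>)) (X (PhiMap \<alpha>))))
           (V (X (PhiMap (H \<beta> \<alpha>))) (X (PhiC (dom2 (FS Gr) \<beta>) (dom2 (FS Gr) \<alpha>))))"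
| cinv1: "mrel Gr hv he (V (X (PhiCi g f)) (X (PhiC g f))) (Id (C (phi1 he g) (phi1 he f)))"
| cinv2: "mrel Gr hv he (V (X (PhiC g f)) (X (PhiCi g f))) (Id (phi1 he (C g f)))"
| uinv1: "mrel Gr hv he (V (X (PhiUi a)) (X (PhiU a))) (Id (U (hv a)))"
| uinv2: "mrel Gr hv he (V (X (PhiU a)) (X (PhiUi a))) (Id (phi1 he (U a)))"
| assoc: "mrel Gr hv he
           (V (X (PhiMap (A h g f))) (V (X (PhiC (C h g) f)) (H (X (PhiC h g)) (Id (phi1 he f)))))
           (V (X (PhiC h (C g f))) (V (H (Id (phi1 he h)) (X (PhiC g f)))
                (A (phi1 he h) (phi1 he g) (phi1 he f))))"
| lunit: "mrel Gr hv he
           (V (X (PhiMap (L f))) (V (X (PhiC (U (tgt1 (FS Gr) f)) f))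
               (H (X (PhiU (tgt1 (FS Gr) f))) (Id (phi1 he f)))))
           (L (phi1 he f))"
| runit: "mrel Gr hv he
           (V (X (PhiMap (R f))) (V (X (PhiC f (U (src1 (FS Gr) f))))
               (H (Id (phi1 he f)) (X (PhiU (src1 (FS Gr) f))))))
           (R (phi1 he f))"

end

theory Submission
  imports Defs
begin


definition wfsig :: "('v,'g,'x) sig \<Rightarrow> bool" where
 "wfsig S \<longleftrightarrow> (\<forall>g\<in>sg S. sgs S g \<in> sv S \<and> sgt S g \<in> sv S) \<and>
    (\<forall>x\<in>sx S. ok1 S (sxd S x) \<and> ok1 S (sxc S x) \<and> src1 S (sxd S x) = src1 S (sxc S x)
        \<and> tgt1 S (sxd S x) = tgt1 S (sxc S x))"

lemma ok1_sv: "wfsig S \<Longrightarrow> ok1 S f \<Longrightarrow> src1 S f \<in> sv S \<and> tgt1 S f \<in> sv S"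
  by (induction f) (auto simp: wfsig_def)

lemma ok2_typ: assumes w: "wfsig S" shows "ok2 S a \<Longrightarrow> ok1 S (dom2 S a) \<and> ok1 S (cod2 S a)
   \<and> src1 S (dom2 S a) = src1 S (cod2 S a) \<and> tgt1 S (dom2 S a) = tgt1 S (cod2 S a)"
  using w by (induction a) (auto simp: wfsig_def dest: ok1_sv[OF w])

lemma beq_typ: "beq S Rel a b \<Longrightarrow> ok2 S a \<and> ok2 S b \<and> dom2 S a = dom2 S b \<and> cod2 S a = cod2 S b"
  by (induction rule: beq.induct) auto

locale pres = fixes S :: "('v,'g,'x) sig" and Rel :: "('v,'g,'x) c2 \<Rightarrow> ('v,'g,'x) c2 \<Rightarrow> bool"
  assumes wfs: "wfsig S"
begin

abbreviation eqv (infix "\<approx>" 50) where "a \<approx> b \<equiv> beq S Rel a b"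
abbreviation "ok2' \<equiv> ok2 S"
abbreviation "dom' \<equiv> dom2 S"
abbreviation "cod' \<equiv> cod2 S"

lemma tp: "ok2 S a \<Longrightarrow> ok1 S (dom2 S a) \<and> ok1 S (cod2 S a)
   \<and> src1 S (dom2 S a) = src1 S (cod2 S a) \<and> tgt1 S (dom2 S a) = tgt1 S (cod2 S a)"
  using ok2_typ wfs by blast

lemma sv1: "ok1 S f \<Longrightarrow> src1 S f \<in> sv S" "ok1 S f \<Longrightarrow> tgt1 S f \<in> sv S"
  using ok1_sv wfs by blast+

lemma eqD: assumes "a \<approx> b" shows "ok2 S a" "ok2 S b" "dom2 S a = dom2 S b" "cod2 S a = cod2 S b"
  using beq_typ[OF assms] by auto

lemma rfl: "ok2 S a \<Longrightarrow> a \<approx> a" by (rule beq.refl)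
lemma sy: "a \<approx> b \<Longrightarrow> b \<approx> a" by (rule beq.sym)
lemmas [trans] = beq.trans

lemma cV: "b \<approx> b' \<Longrightarrow> a \<approx> a' \<Longrightarrow> cod2 S a = dom2 S b \<Longrightarrow> V b a \<approx> V b' a'"
  by (rule beq.congV) (auto dest: eqD)
lemma cH: "b \<approx> b' \<Longrightarrow> a \<approx> a' \<Longrightarrow> src1 S (dom2 S b) = tgt1 S (dom2 S a) \<Longrightarrow> H b a \<approx> H b' a'"
  by (rule beq.congH) (auto dest: eqD)
lemma cV1: "b \<approx> b' \<Longrightarrow> ok2 S a \<Longrightarrow> cod2 S a = dom2 S b \<Longrightarrow> V b a \<approx> V b' a"
  by (rule cV) (auto intro: rfl)
lemma cV2: "a \<approx> a' \<Longrightarrow> ok2 S b \<Longrightarrow> cod2 S a = dom2 S b \<Longrightarrow> V b a \<approx> V b a'"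
  by (rule cV) (auto intro: rfl)
lemma cH1: "b \<approx> b' \<Longrightarrow> ok2 S a \<Longrightarrow> src1 S (dom2 S b) = tgt1 S (dom2 S a) \<Longrightarrow> H b a \<approx> H b' a"
  by (rule cH) (auto intro: rfl)
lemma cH2: "a \<approx> a' \<Longrightarrow> ok2 S b \<Longrightarrow> src1 S (dom2 S b) = tgt1 S (dom2 S a) \<Longrightarrow> H b a \<approx> H b a'"
  by (rule cH) (auto intro: rfl)

lemma ax: "bax S a b \<Longrightarrow> ok2 S a \<Longrightarrow> ok2 S b \<Longrightarrow> dom2 S a = dom2 S b \<Longrightarrow> cod2 S a = cod2 S b \<Longrightarrow> a \<approx> b"
  by (rule beq.gen) auto
lemma rel: "Rel a b \<Longrightarrow> ok2 S a \<Longrightarrow> ok2 S b \<Longrightarrow> dom2 S a = dom2 S b \<Longrightarrow> cod2 S a = cod2 S b \<Longrightarrow> a \<approx> b"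
  by (rule beq.gen) auto

lemma idl: "ok2 S a \<Longrightarrow> cod2 S a = f \<Longrightarrow> V (Id f) a \<approx> a"
  using tp[of a] by (auto intro!: ax bax.idl)
lemma idr: "ok2 S a \<Longrightarrow> dom2 S a = f \<Longrightarrow> V a (Id f) \<approx> a"
  using tp[of a] by (auto intro!: ax bax.idr)
lemma vas: "ok2 S (V (V c b) a) \<Longrightarrow> V (V c b) a \<approx> V c (V b a)"
  by (auto intro!: ax bax.vassoc)
lemma hid: "ok1 S g \<Longrightarrow> ok1 S f \<Longrightarrow> src1 S g = tgt1 S f \<Longrightarrow> H (Id g) (Id f) \<approx> Id (C g f)"
  by (auto intro!: ax bax.hid)
lemma ich: "ok2 S (H (V b' b) (V a' a)) \<Longrightarrow> H (V b' b) (V a' a) \<approx> V (H b' a') (H b a)"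
  using tp[of b] tp[of a] by (auto intro!: ax bax.interchange)

declare sv1[simp]

lemma ainv1: "ok1 S h \<Longrightarrow> ok1 S g \<Longrightarrow> ok1 S f \<Longrightarrow> src1 S h = tgt1 S g \<Longrightarrow> src1 S g = tgt1 S f
  \<Longrightarrow> V (Ai h g f) (A h g f) \<approx> Id (C (C h g) f)"
  by (auto intro!: ax bax.ainv1)
lemma ainv2: "ok1 S h \<Longrightarrow> ok1 S g \<Longrightarrow> ok1 S f \<Longrightarrow> src1 S h = tgt1 S g \<Longrightarrow> src1 S g = tgt1 S f
  \<Longrightarrow> V (A h g f) (Ai h g f) \<approx> Id (C h (C g f))"
  by (auto intro!: ax bax.ainv2)
lemma linv1: "ok1 S f \<Longrightarrow> V (Li f) (L f) \<approx> Id (C (U (tgt1 S f)) f)"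
  by (auto intro!: ax bax.linv1)
lemma linv2: "ok1 S f \<Longrightarrow> V (L f) (Li f) \<approx> Id f"
  by (auto intro!: ax bax.linv2)
lemma rinv1: "ok1 S f \<Longrightarrow> V (Ri f) (R f) \<approx> Id (C f (U (src1 S f)))"
  by (auto intro!: ax bax.rinv1)
lemma rinv2: "ok1 S f \<Longrightarrow> V (R f) (Ri f) \<approx> Id f"
  by (auto intro!: ax bax.rinv2)

lemma anat: "ok2 S c \<Longrightarrow> ok2 S b \<Longrightarrow> ok2 S a \<Longrightarrow> dom2 S c = h \<Longrightarrow> dom2 S b = g \<Longrightarrow> dom2 S a = f
  \<Longrightarrow> cod2 S c = h' \<Longrightarrow> cod2 S b = g' \<Longrightarrow> cod2 S a = f' \<Longrightarrow> src1 S h = tgt1 S g \<Longrightarrow> src1 S g = tgt1 S f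
  \<Longrightarrow> V (A h' g' f') (H (H c b) a) \<approx> V (H c (H b a)) (A h g f)"
  using tp[of a] tp[of b] tp[of c] by (auto intro!: ax bax.anat[where \<gamma>=c and \<beta>=b and \<alpha>=a, simplified])

lemma lnat: "ok2 S a \<Longrightarrow> dom2 S a = f \<Longrightarrow> cod2 S a = f' \<Longrightarrow> t = tgt1 S f
  \<Longrightarrow> V (L f') (H (Id (U t)) a) \<approx> V a (L f)"
  using tp[of a] by (auto intro!: ax bax.lnat[where \<alpha>=a, simplified])
lemma rnat: "ok2 S a \<Longrightarrow> dom2 S a = f \<Longrightarrow> cod2 S a = f' \<Longrightarrow> s = src1 S f
  \<Longrightarrow> V (R f') (H a (Id (U s))) \<approx> V a (R f)"
  using tp[of a] by (auto intro!: ax bax.rnat[where \<alpha>=a, simplified])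
lemma pentagon: "ok1 S k \<Longrightarrow> ok1 S h \<Longrightarrow> ok1 S g \<Longrightarrow> ok1 S f \<Longrightarrow> src1 S k = tgt1 S h \<Longrightarrow>
  src1 S h = tgt1 S g \<Longrightarrow> src1 S g = tgt1 S f \<Longrightarrow>
  V (A k h (C g f)) (A (C k h) g f) \<approx> V (H (Id k) (A h g f)) (V (A k (C h g) f) (H (A k h g) (Id f)))"
  by (auto intro!: ax bax.pentagon)
lemma triangle: "ok1 S g \<Longrightarrow> ok1 S f \<Longrightarrow> src1 S g = tgt1 S f \<Longrightarrow> t = tgt1 S f \<Longrightarrow>
  V (H (Id g) (L f)) (A g (U t) f) \<approx> H (R g) (Id f)"
  by (auto intro!: ax bax.triangle)

definition inv_pair :: "('v,'g,'x) c2 \<Rightarrow> ('v,'g,'x) c2 \<Rightarrow> bool" where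
 "inv_pair a b \<longleftrightarrow> ok2 S a \<and> ok2 S b \<and> dom2 S b = cod2 S a \<and> cod2 S b = dom2 S a \<and>
    V b a \<approx> Id (dom2 S a) \<and> V a b \<approx> Id (cod2 S a)"
definition iso :: "('v,'g,'x) c2 \<Rightarrow> bool" where "iso a \<longleftrightarrow> (\<exists>b. inv_pair a b)"

lemma inv_sym: "inv_pair a b \<Longrightarrow> inv_pair b a" by (auto simp: inv_pair_def)
lemma inv_iso: "inv_pair a b \<Longrightarrow> iso a" "inv_pair a b \<Longrightarrow> iso b"
  by (auto simp: iso_def intro: inv_sym)

lemma inv_A: "ok1 S h \<Longrightarrow> ok1 S g \<Longrightarrow> ok1 S f \<Longrightarrow> src1 S h = tgt1 S g \<Longrightarrow> src1 S g = tgt1 S f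
  \<Longrightarrow> inv_pair (A h g f) (Ai h g f)"
  by (simp add: inv_pair_def ainv1 ainv2)
lemma inv_L: "ok1 S f \<Longrightarrow> inv_pair (L f) (Li f)"
  by (simp add: inv_pair_def linv1 linv2)
lemma inv_R: "ok1 S f \<Longrightarrow> inv_pair (R f) (Ri f)"
  by (simp add: inv_pair_def rinv1 rinv2)
lemma inv_Id: "ok1 S f \<Longrightarrow> inv_pair (Id f) (Id f)"
  by (simp add: inv_pair_def idl)

lemma inv_V: assumes "inv_pair a a'" "inv_pair b b'" "cod2 S a = dom2 S b"
  shows "inv_pair (V b a) (V a' b')"
proof -
  have o: "ok2 S a" "ok2 S a'" "ok2 S b" "ok2 S b'" and d: "dom2 S a' = cod2 S a" "cod2 S a' = dom2 S a"
      "dom2 S b' = cod2 S b" "cod2 S b' = dom2 S b"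
    and e: "V a' a \<approx> Id (dom2 S a)" "V a a' \<approx> Id (cod2 S a)" "V b' b \<approx> Id (dom2 S b)" "V b b' \<approx> Id (cod2 S b)"
    using assms by (auto simp: inv_pair_def)
  have "V (V a' b') (V b a) \<approx> V a' (V b' (V b a))" using o d assms(3) by (intro vas) auto
  also have "\<dots> \<approx> V a' (V (V b' b) a)" using o d assms(3) by (intro cV2 sy[OF vas]) auto
  also have "\<dots> \<approx> V a' (V (Id (dom2 S b)) a)" using o d assms(3) e by (intro cV2 cV1) auto
  also have "\<dots> \<approx> V a' a" using o d assms(3) e by (intro cV2 idl) auto
  also have "\<dots> \<approx> Id (dom2 S a)" by (rule e)
  finally have 1: "V (V a' b') (V b a) \<approx> Id (dom2 S (V b a))" by simp
  have "V (V b a) (V a' b') \<approx> V b (V a (V a' b'))" using o d assms(3) by (intro vas) auto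
  also have "\<dots> \<approx> V b (V (V a a') b')" using o d assms(3) by (intro cV2 sy[OF vas]) auto
  also have "\<dots> \<approx> V b (V (Id (cod2 S a)) b')" using o d assms(3) e by (intro cV2 cV1) auto
  also have "\<dots> \<approx> V b b'" using o d assms(3) e by (intro cV2 idl) auto
  also have "\<dots> \<approx> Id (cod2 S b)" by (rule e)
  finally have 2: "V (V b a) (V a' b') \<approx> Id (cod2 S (V b a))" by simp
  show ?thesis using 1 2 o d assms(3) by (simp add: inv_pair_def)
qed

lemma wdist: assumes "ok2 S (V b a)" "ok2 S (V d c)" "src1 S (dom2 S b) = tgt1 S (dom2 S d)"
  shows "H (V b a) (V d c) \<approx> V (H b d) (H a c)"
  using assms tp[of a] tp[of c] by (intro ich) auto

lemma wl: assumes "ok2 S (V b a)" "ok1 S k" "src1 S k = tgt1 S (dom2 S a)"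
  shows "H (Id k) (V b a) \<approx> V (H (Id k) b) (H (Id k) a)"
proof -
  have "H (Id k) (V b a) \<approx> H (V (Id k) (Id k)) (V b a)" using assms by (intro cH1 sy[OF idl]) auto
  also have "\<dots> \<approx> V (H (Id k) b) (H (Id k) a)" using assms tp[of a] tp[of b] by (intro ich) auto
  finally show ?thesis .
qed
lemma wr: assumes "ok2 S (V b a)" "ok1 S k" "tgt1 S k = src1 S (dom2 S a)"
  shows "H (V b a) (Id k) \<approx> V (H b (Id k)) (H a (Id k))"
proof -
  have "H (V b a) (Id k) \<approx> H (V b a) (V (Id k) (Id k))" using assms by (intro cH2 sy[OF idl]) auto
  also have "\<dots> \<approx> V (H b (Id k)) (H a (Id k))" using assms tp[of a] tp[of b] by (intro ich) auto
  finally show ?thesis .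
qed

lemma inv_H: assumes "inv_pair a a'" "inv_pair b b'" "src1 S (dom2 S b) = tgt1 S (dom2 S a)"
  shows "inv_pair (H b a) (H b' a')"
proof -
  have o: "ok2 S a" "ok2 S a'" "ok2 S b" "ok2 S b'" and d: "dom2 S a' = cod2 S a" "cod2 S a' = dom2 S a"
      "dom2 S b' = cod2 S b" "cod2 S b' = dom2 S b"
    and e: "V a' a \<approx> Id (dom2 S a)" "V a a' \<approx> Id (cod2 S a)" "V b' b \<approx> Id (dom2 S b)" "V b b' \<approx> Id (cod2 S b)"
    using assms by (auto simp: inv_pair_def)
  note t = tp[of a] tp[of b]
  have "V (H b' a') (H b a) \<approx> H (V b' b) (V a' a)" using o d t assms(3) by (intro sy[OF ich]) auto
  also have "\<dots> \<approx> H (Id (dom2 S b)) (Id (dom2 S a))" using o d t e assms(3) by (intro cH) auto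
  also have "\<dots> \<approx> Id (C (dom2 S b) (dom2 S a))" using o d t assms(3) by (intro hid) auto
  finally have 1: "V (H b' a') (H b a) \<approx> Id (dom2 S (H b a))" by simp
  have "V (H b a) (H b' a') \<approx> H (V b b') (V a a')" using o d t assms(3) by (intro sy[OF ich]) auto
  also have "\<dots> \<approx> H (Id (cod2 S b)) (Id (cod2 S a))" using o d t e assms(3) by (intro cH) auto
  also have "\<dots> \<approx> Id (C (cod2 S b) (cod2 S a))" using o d t assms(3) by (intro hid) auto
  finally have 2: "V (H b a) (H b' a') \<approx> Id (cod2 S (H b a))" by simp
  show ?thesis using 1 2 o d t assms(3) by (simp add: inv_pair_def)
qed

lemma iso_V: "iso a \<Longrightarrow> iso b \<Longrightarrow> cod2 S a = dom2 S b \<Longrightarrow> iso (V b a)"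
  unfolding iso_def using inv_V by blast
lemma iso_H: "iso a \<Longrightarrow> iso b \<Longrightarrow> src1 S (dom2 S b) = tgt1 S (dom2 S a) \<Longrightarrow> iso (H b a)"
  unfolding iso_def using inv_H by blast
lemma iso_ok: "iso a \<Longrightarrow> ok2 S a" by (auto simp: iso_def inv_pair_def)

lemma cancel_l: assumes "iso c" "V c a \<approx> V c b" "cod2 S a = dom2 S c" shows "a \<approx> b"
proof -
  obtain c' where i: "inv_pair c c'" using assms(1) iso_def by blast
  have b: "ok2 S a" "ok2 S b" "cod2 S b = dom2 S c" using eqD[OF assms(2)] assms(3) by auto
  have "a \<approx> V (Id (dom2 S c)) a" using b assms(3) by (intro sy[OF idl]) auto
  also have "\<dots> \<approx> V (V c' c) a" using i b assms(3) by (intro cV1[OF sy]) (auto simp: inv_pair_def)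
  also have "\<dots> \<approx> V c' (V c a)" using i b assms(3) by (intro vas) (auto simp: inv_pair_def)
  also have "\<dots> \<approx> V c' (V c b)" by (rule cV2) (use i b assms in \<open>auto simp: inv_pair_def\<close>)
  also have "\<dots> \<approx> V (V c' c) b" using i b assms(3) by (intro sy[OF vas]) (auto simp: inv_pair_def)
  also have "\<dots> \<approx> V (Id (dom2 S c)) b" using i b assms(3) by (intro cV1) (auto simp: inv_pair_def)
  also have "\<dots> \<approx> b" using b by (intro idl) auto
  finally show ?thesis .
qed
lemma cancel_r: assumes "iso c" "V a c \<approx> V b c" "dom2 S a = cod2 S c" shows "a \<approx> b"
proof -
  obtain c' where i: "inv_pair c c'" using assms(1) iso_def by blast
  have b: "ok2 S a" "ok2 S b" "dom2 S b = cod2 S c" using eqD[OF assms(2)] assms(3) by auto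
  have "a \<approx> V a (Id (cod2 S c))" using b assms(3) by (intro sy[OF idr]) auto
  also have "\<dots> \<approx> V a (V c c')" using i b assms(3) by (intro cV2[OF sy]) (auto simp: inv_pair_def)
  also have "\<dots> \<approx> V (V a c) c'" using i b assms(3) by (intro sy[OF vas]) (auto simp: inv_pair_def)
  also have "\<dots> \<approx> V (V b c) c'" by (rule cV1) (use i b assms in \<open>auto simp: inv_pair_def\<close>)
  also have "\<dots> \<approx> V b (V c c')" using i b assms(3) by (intro vas) (auto simp: inv_pair_def)
  also have "\<dots> \<approx> V b (Id (cod2 S c))" using i b assms(3) by (intro cV2) (auto simp: inv_pair_def)
  also have "\<dots> \<approx> b" using b by (intro idr) auto
  finally show ?thesis .
qed

lemma iso_A: "ok1 S h \<Longrightarrow> ok1 S g \<Longrightarrow> ok1 S f \<Longrightarrow> src1 S h = tgt1 S g \<Longrightarrow> src1 S g = tgt1 S f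
  \<Longrightarrow> iso (A h g f)" using inv_A inv_iso by blast
lemma iso_L: "ok1 S f \<Longrightarrow> iso (L f)" using inv_L inv_iso by blast
lemma iso_R: "ok1 S f \<Longrightarrow> iso (R f)" using inv_R inv_iso by blast
lemma iso_Id: "ok1 S f \<Longrightarrow> iso (Id f)" using inv_Id inv_iso by blast

lemma wcancel_l: assumes "H (Id (U t)) a \<approx> H (Id (U t)) b" "ok2 S a" "tgt1 S (dom2 S a) = t"
  shows "a \<approx> b"
proof -
  have b: "ok2 S b" "dom2 S b = dom2 S a" "cod2 S b = cod2 S a" using eqD[OF assms(1)] by auto
  have "V a (L (dom2 S a)) \<approx> V (L (cod2 S a)) (H (Id (U t)) a)"
    using assms tp[of a] by (intro sy[OF lnat]) auto
  also have "\<dots> \<approx> V (L (cod2 S a)) (H (Id (U t)) b)"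
    using assms tp[of a] by (intro cV2) auto
  also have "\<dots> \<approx> V b (L (dom2 S a))"
    using assms tp[of a] b by (intro lnat) auto
  finally have e: "V a (L (dom2 S a)) \<approx> V b (L (dom2 S a))" .
  show ?thesis using tp[of a] assms(2) by (intro cancel_r[OF iso_L e]) auto
qed
lemma wcancel_r: assumes "H a (Id (U s)) \<approx> H b (Id (U s))" "ok2 S a" "src1 S (dom2 S a) = s"
  shows "a \<approx> b"
proof -
  have b: "ok2 S b" "dom2 S b = dom2 S a" "cod2 S b = cod2 S a" using eqD[OF assms(1)] by auto
  have "V a (R (dom2 S a)) \<approx> V (R (cod2 S a)) (H a (Id (U s)))"
    using assms tp[of a] by (intro sy[OF rnat]) auto
  also have "\<dots> \<approx> V (R (cod2 S a)) (H b (Id (U s)))"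
    using assms tp[of a] by (intro cV2) auto
  also have "\<dots> \<approx> V b (R (dom2 S a))"
    using assms tp[of a] b by (intro rnat) auto
  finally have e: "V a (R (dom2 S a)) \<approx> V b (R (dom2 S a))" .
  show ?thesis using tp[of a] assms(2) by (intro cancel_r[OF iso_R e]) auto
qed

end



fun nf :: "('g \<Rightarrow> 'g list) \<Rightarrow> ('v,'g) w1 \<Rightarrow> 'g list" where
  "nf gn (U v) = []" | "nf gn (G g) = gn g" | "nf gn (C g f) = nf gn g @ nf gn f"
fun real :: "'v \<Rightarrow> 'g list \<Rightarrow> ('v,'g) w1" where
  "real s [] = U s" | "real s (x#xs) = C (G x) (real s xs)"
fun nu :: "'v \<Rightarrow> 'v \<Rightarrow> 'g list \<Rightarrow> 'g list \<Rightarrow> ('v,'g,'x) c2" where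
  "nu s1 s2 [] l2 = L (real s2 l2)"
| "nu s1 s2 (x#xs) l2 = V (H (Id (G x)) (nu s1 s2 xs l2)) (A (G x) (real s1 xs) (real s2 l2))"
fun can :: "('v,'g,'x) sig \<Rightarrow> ('g \<Rightarrow> 'g list) \<Rightarrow> ('g \<Rightarrow> ('v,'g,'x) c2) \<Rightarrow> ('v,'g) w1 \<Rightarrow> ('v,'g,'x) c2" where
  "can S gn gc (U v) = Id (U v)" | "can S gn gc (G g) = gc g"
| "can S gn gc (C g f) = V (nu (src1 S g) (src1 S f) (nf gn g) (nf gn f)) (H (can S gn gc g) (can S gn gc f))"

lemma real_src[simp]: "src1 S (real s l) = s" by (induction l) auto
lemma real_tgt: "tgt1 S (real s l) = (case l of [] \<Rightarrow> s | x#_ \<Rightarrow> sgt S x)" by (cases l) auto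
context pres begin

lemma K3: assumes g: "ok1 S g" and f: "ok1 S f" and gf: "src1 S g = tgt1 S f"
  shows "V (L (C g f)) (A (U (tgt1 S g)) g f) \<approx> H (L g) (Id f)"
proof -
  note [simp] = g f gf
  let ?u = "U (tgt1 S g) :: ('v,'g) w1"
  define P where "P = (V (A ?u (C ?u g) f) (H (A ?u ?u g) (Id f)) :: ('v,'g,'x) c2)"
  have Pi: "iso P" unfolding P_def
    by (intro iso_V iso_H iso_A iso_Id) auto
  have [simp]: "ok2 S P" "dom2 S P = C (C (C ?u ?u) g) f" "cod2 S P = C ?u (C (C ?u g) f)"
    by (auto simp: P_def)
  have "V (H (Id ?u) (V (L (C g f)) (A ?u g f))) P \<approx> V (V (H (Id ?u) (L (C g f))) (H (Id ?u) (A ?u g f))) P"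
    by (rule cV1[OF wl]) auto
  also have "\<dots> \<approx> V (H (Id ?u) (L (C g f))) (V (H (Id ?u) (A ?u g f)) P)"
    by (rule vas) auto
  also have "\<dots> \<approx> V (H (Id ?u) (L (C g f))) (V (A ?u ?u (C g f)) (A (C ?u ?u) g f))"
    unfolding P_def by (rule cV2[OF sy[OF pentagon]]) auto
  also have "\<dots> \<approx> V (V (H (Id ?u) (L (C g f))) (A ?u ?u (C g f))) (A (C ?u ?u) g f)"
    by (rule sy[OF vas]) auto
  also have "\<dots> \<approx> V (H (R ?u) (Id (C g f))) (A (C ?u ?u) g f)"
    by (rule cV1[OF triangle]) auto
  also have "\<dots> \<approx> V (H (R ?u) (H (Id g) (Id f))) (A (C ?u ?u) g f)"
    by (rule cV1[OF cH2[OF sy[OF hid]]]) auto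
  also have "\<dots> \<approx> V (A ?u g f) (H (H (R ?u) (Id g)) (Id f))"
    by (rule sy[OF anat]) auto
  also have "\<dots> \<approx> V (A ?u g f) (H (V (H (Id ?u) (L g)) (A ?u ?u g)) (Id f))"
    by (rule cV2[OF cH1[OF sy[OF triangle]]]) auto
  also have "\<dots> \<approx> V (A ?u g f) (V (H (H (Id ?u) (L g)) (Id f)) (H (A ?u ?u g) (Id f)))"
    by (rule cV2[OF wr]) auto
  also have "\<dots> \<approx> V (V (A ?u g f) (H (H (Id ?u) (L g)) (Id f))) (H (A ?u ?u g) (Id f))"
    by (rule sy[OF vas]) auto
  also have "\<dots> \<approx> V (V (H (Id ?u) (H (L g) (Id f))) (A ?u (C ?u g) f)) (H (A ?u ?u g) (Id f))"
    by (rule cV1[OF anat]) auto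
  also have "\<dots> \<approx> V (H (Id ?u) (H (L g) (Id f))) P"
    unfolding P_def by (rule vas) auto
  finally have "H (Id ?u) (V (L (C g f)) (A ?u g f)) \<approx> H (Id ?u) (H (L g) (Id f))"
    by (rule cancel_r[OF Pi]) auto
  thus ?thesis by (rule wcancel_l) auto
qed


lemma K2: assumes g: "ok1 S g" and f: "ok1 S f" and gf: "src1 S g = tgt1 S f"
  shows "V (H (Id g) (R f)) (A g f (U (src1 S f))) \<approx> R (C g f)"
proof -
  note [simp] = g f gf
  let ?u = "U (src1 S f) :: ('v,'g) w1"
  have iA: "iso (A g f ?u)" by (rule iso_A) auto
  have "V (A g f ?u) (H (R (C g f)) (Id ?u)) \<approx> V (A g f ?u) (V (H (Id (C g f)) (L ?u)) (A (C g f) ?u ?u))"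
    by (rule cV2[OF sy[OF triangle]]) auto
  also have "\<dots> \<approx> V (A g f ?u) (V (H (H (Id g) (Id f)) (L ?u)) (A (C g f) ?u ?u))"
    by (rule cV2[OF cV1[OF cH1[OF sy[OF hid]]]]) auto
  also have "\<dots> \<approx> V (V (A g f ?u) (H (H (Id g) (Id f)) (L ?u))) (A (C g f) ?u ?u)"
    by (rule sy[OF vas]) auto
  also have "\<dots> \<approx> V (V (H (Id g) (H (Id f) (L ?u))) (A g f (C ?u ?u))) (A (C g f) ?u ?u)"
    by (rule cV1[OF anat]) auto
  also have "\<dots> \<approx> V (H (Id g) (H (Id f) (L ?u))) (V (A g f (C ?u ?u)) (A (C g f) ?u ?u))"
    by (rule vas) auto
  also have "\<dots> \<approx> V (H (Id g) (H (Id f) (L ?u))) (V (H (Id g) (A f ?u ?u)) (V (A g (C f ?u) ?u) (H (A g f ?u) (Id ?u))))"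
    by (rule cV2[OF pentagon]) auto
  also have "\<dots> \<approx> V (V (H (Id g) (H (Id f) (L ?u))) (H (Id g) (A f ?u ?u))) (V (A g (C f ?u) ?u) (H (A g f ?u) (Id ?u)))"
    by (rule sy[OF vas]) auto
  also have "\<dots> \<approx> V (H (Id g) (V (H (Id f) (L ?u)) (A f ?u ?u))) (V (A g (C f ?u) ?u) (H (A g f ?u) (Id ?u)))"
    by (rule cV1[OF sy[OF wl]]) auto
  also have "\<dots> \<approx> V (H (Id g) (H (R f) (Id ?u))) (V (A g (C f ?u) ?u) (H (A g f ?u) (Id ?u)))"
    by (rule cV1[OF cH2[OF triangle]]) auto
  also have "\<dots> \<approx> V (V (H (Id g) (H (R f) (Id ?u))) (A g (C f ?u) ?u)) (H (A g f ?u) (Id ?u))"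
    by (rule sy[OF vas]) auto
  also have "\<dots> \<approx> V (V (A g f ?u) (H (H (Id g) (R f)) (Id ?u))) (H (A g f ?u) (Id ?u))"
    by (rule cV1[OF sy[OF anat]]) auto
  also have "\<dots> \<approx> V (A g f ?u) (V (H (H (Id g) (R f)) (Id ?u)) (H (A g f ?u) (Id ?u)))"
    by (rule vas) auto
  also have "\<dots> \<approx> V (A g f ?u) (H (V (H (Id g) (R f)) (A g f ?u)) (Id ?u))"
    by (rule cV2[OF sy[OF wr]]) auto
  finally have "H (R (C g f)) (Id ?u) \<approx> H (V (H (Id g) (R f)) (A g f ?u)) (Id ?u)"
    by (rule cancel_l[OF iA]) auto
  hence "R (C g f) \<approx> V (H (Id g) (R f)) (A g f ?u)" by (rule wcancel_r) auto
  thus ?thesis by (rule sy)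
qed

lemma K1: assumes v: "v \<in> sv S" shows "L (U v) \<approx> R (U v)"
proof -
  let ?u = "U v :: ('v,'g) w1"
  note [simp] = v
  have e: "V (L ?u) (H (Id ?u) (L ?u)) \<approx> V (L ?u) (L (C ?u ?u))" by (rule lnat) auto
  have iL: "iso (L ?u)" by (rule iso_L) simp
  have 1: "H (Id ?u) (L ?u) \<approx> L (C ?u ?u)" by (rule cancel_l[OF iL e]) simp
  have "H (L ?u) (Id ?u) \<approx> V (L (C ?u ?u)) (A ?u ?u ?u)" by (rule sy[OF K3[of ?u ?u, simplified]])
  also have "\<dots> \<approx> V (H (Id ?u) (L ?u)) (A ?u ?u ?u)" by (rule cV1[OF sy[OF 1]]) auto
  also have "\<dots> \<approx> H (R ?u) (Id ?u)" by (rule triangle) auto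
  finally show ?thesis by (rule wcancel_r) auto
qed


lemma real_app: "ok1 S (real s1 l1) \<Longrightarrow> ok1 S (real s2 l2) \<Longrightarrow> s1 = tgt1 S (real s2 l2) \<Longrightarrow>
   ok1 S (real s2 (l1@l2)) \<and> tgt1 S (real s2 (l1@l2)) = tgt1 S (real s1 l1)"
  by (induction l1) auto

lemma nu_typ: "ok1 S (real s1 l1) \<Longrightarrow> ok1 S (real s2 l2) \<Longrightarrow> s1 = tgt1 S (real s2 l2) \<Longrightarrow>
   ok2 S (nu s1 s2 l1 l2) \<and> dom2 S (nu s1 s2 l1 l2) = C (real s1 l1) (real s2 l2)
   \<and> cod2 S (nu s1 s2 l1 l2) = real s2 (l1@l2) \<and> iso (nu s1 s2 l1 l2)"
proof (induction l1)
  case Nil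
  then show ?case by (auto intro: iso_L)
next
  case (Cons x xs)
  then have h: "ok1 S (real s1 xs)" "x \<in> sg S" "sgs S x = tgt1 S (real s1 xs)" by auto
  have ra: "ok1 S (real s2 (xs@l2))" "tgt1 S (real s2 (xs@l2)) = tgt1 S (real s1 xs)"
    using real_app[OF h(1) Cons.prems(2,3)] by auto
  from Cons.IH[OF h(1) Cons.prems(2,3)] have ih: "ok2 S (nu s1 s2 xs l2)" "dom2 S (nu s1 s2 xs l2) = C (real s1 xs) (real s2 l2)"
    "cod2 S (nu s1 s2 xs l2) = real s2 (xs@l2)" "iso (nu s1 s2 xs l2)" by auto
  show ?case using ih h ra Cons.prems
    by (auto intro!: iso_V iso_H iso_A iso_Id)
qed


lemma real_sv: "ok1 S (real s l) \<Longrightarrow> s \<in> sv S"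
  using sv1(1)[of "real s l"] by simp

lemma nu_ok[simp]: "ok1 S (real s1 l1) \<Longrightarrow> ok1 S (real s2 l2) \<Longrightarrow> s1 = tgt1 S (real s2 l2) \<Longrightarrow> ok2 S (nu s1 s2 l1 l2)"
  using nu_typ by blast
lemma nu_dom[simp]: "ok1 S (real s1 l1) \<Longrightarrow> ok1 S (real s2 l2) \<Longrightarrow> s1 = tgt1 S (real s2 l2) \<Longrightarrow> dom2 S (nu s1 s2 l1 l2) = C (real s1 l1) (real s2 l2)"
  using nu_typ by blast
lemma nu_cod[simp]: "ok1 S (real s1 l1) \<Longrightarrow> ok1 S (real s2 l2) \<Longrightarrow> s1 = tgt1 S (real s2 l2) \<Longrightarrow> cod2 S (nu s1 s2 l1 l2) = real s2 (l1@l2)"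
  using nu_typ by blast

lemma nuR: "ok1 S (real s l) \<Longrightarrow> nu s s l [] \<approx> R (real s l)"
proof (induction l)
  case Nil
  then show ?case using K1[of s] by simp
next
  case (Cons x xs)
  then have h[simp]: "ok1 S (real s xs)" "x \<in> sg S" "sgs S x = tgt1 S (real s xs)" by auto
  have [simp]: "s \<in> sv S" using real_sv[OF h(1)] .
  have "nu s s (x#xs) [] = V (H (Id (G x)) (nu s s xs [])) (A (G x) (real s xs) (U s))" by simp
  also have "\<dots> \<approx> V (H (Id (G x)) (R (real s xs))) (A (G x) (real s xs) (U s))"
    using Cons.IH h by (intro cV1 cH2) auto
  also have "\<dots> \<approx> R (C (G x) (real s xs))" using K2[of "G x" "real s xs"] by simp
  finally show ?case by simp
qed

lemma nu_assoc: assumes "ok1 S (real s1 l1)" "ok1 S (real s2 l2)" "ok1 S (real s3 l3)"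
   "s1 = tgt1 S (real s2 l2)" "s2 = tgt1 S (real s3 l3)"
 shows "V (nu s1 s3 l1 (l2@l3)) (V (H (Id (real s1 l1)) (nu s2 s3 l2 l3)) (A (real s1 l1) (real s2 l2) (real s3 l3)))
     \<approx> V (nu s2 s3 (l1@l2) l3) (H (nu s1 s2 l1 l2) (Id (real s3 l3)))"
  using assms
proof (induction l1)
  case Nil
  have r23[simp]: "ok1 S (real s3 (l2@l3))" "tgt1 S (real s3 (l2@l3)) = tgt1 S (real s2 l2)"
    using real_app[OF Nil.prems(2,3,5)] by auto
  have [simp]: "s3 \<in> sv S" "s2 \<in> sv S" "s1 \<in> sv S" using real_sv Nil.prems by blast+
  note [simp] = Nil.prems(1-3) Nil.prems(4,5)[symmetric]
  have "V (L (real s3 (l2@l3))) (V (H (Id (U s1)) (nu s2 s3 l2 l3)) (A (U s1) (real s2 l2) (real s3 l3)))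
     \<approx> V (V (L (real s3 (l2@l3))) (H (Id (U s1)) (nu s2 s3 l2 l3))) (A (U s1) (real s2 l2) (real s3 l3))"
    by (rule sy[OF vas]) simp
  also have "\<dots> \<approx> V (V (nu s2 s3 l2 l3) (L (C (real s2 l2) (real s3 l3)))) (A (U s1) (real s2 l2) (real s3 l3))"
    by (rule cV1[OF lnat]) auto
  also have "\<dots> \<approx> V (nu s2 s3 l2 l3) (V (L (C (real s2 l2) (real s3 l3))) (A (U s1) (real s2 l2) (real s3 l3)))"
    by (rule vas) simp
  also have "\<dots> \<approx> V (nu s2 s3 l2 l3) (H (L (real s2 l2)) (Id (real s3 l3)))"
    by (rule cV2) (use K3[of "real s2 l2" "real s3 l3"] in auto)
  finally show ?case by simp
next
  case (Cons x xs)
  have h: "ok1 S (real s1 xs)" "x \<in> sg S" "sgs S x = tgt1 S (real s1 xs)" using Cons.prems by auto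
  have r23: "ok1 S (real s3 (l2@l3))" "tgt1 S (real s3 (l2@l3)) = tgt1 S (real s2 l2)"
    using real_app[OF Cons.prems(2,3,5)] by auto
  have r12: "ok1 S (real s2 (xs@l2))" "tgt1 S (real s2 (xs@l2)) = tgt1 S (real s1 xs)"
    using real_app[OF h(1) Cons.prems(2,4)] by auto
  have r123: "ok1 S (real s3 (xs@l2@l3))" "tgt1 S (real s3 (xs@l2@l3)) = tgt1 S (real s1 xs)"
    using real_app[OF h(1) r23(1)] r23(2) Cons.prems(4) by auto
  have [simp]: "s3 \<in> sv S" "s2 \<in> sv S" "s1 \<in> sv S" using real_sv Cons.prems h by blast+
  have IH: "V (nu s1 s3 xs (l2@l3)) (V (H (Id (real s1 xs)) (nu s2 s3 l2 l3)) (A (real s1 xs) (real s2 l2) (real s3 l3)))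
     \<approx> V (nu s2 s3 (xs@l2) l3) (H (nu s1 s2 xs l2) (Id (real s3 l3)))"
    by (rule Cons.IH[OF h(1) Cons.prems(2-5)])
  note [simp] = Cons.prems(2,3) Cons.prems(4,5)[symmetric] h r23 r12 r123
  let ?X = "G x" and ?P = "real s1 xs" and ?Q = "real s2 l2" and ?T = "real s3 l3"
  let ?N1 = "nu s1 s3 xs (l2@l3)" and ?N23 = "nu s2 s3 l2 l3" and ?N12 = "nu s1 s2 xs l2"
  let ?N' = "nu s2 s3 (xs@l2) l3" and ?R' = "real s2 (xs@l2)" and ?QT = "real s3 (l2@l3)"
  let ?Z = "V (A ?X (C ?P ?Q) ?T) (H (A ?X ?P ?Q) (Id ?T))"
  have "V (V (H (Id ?X) ?N1) (A ?X ?P ?QT)) (V (H (Id (C ?X ?P)) ?N23) (A (C ?X ?P) ?Q ?T))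
    \<approx> V (H (Id ?X) ?N1) (V (A ?X ?P ?QT) (V (H (Id (C ?X ?P)) ?N23) (A (C ?X ?P) ?Q ?T)))"
    by (rule vas) simp
  also have "\<dots> \<approx> V (H (Id ?X) ?N1) (V (A ?X ?P ?QT) (V (H (H (Id ?X) (Id ?P)) ?N23) (A (C ?X ?P) ?Q ?T)))"
    by (rule cV2[OF cV2[OF cV1[OF cH1[OF sy[OF hid]]]]]) auto
  also have "\<dots> \<approx> V (H (Id ?X) ?N1) (V (V (A ?X ?P ?QT) (H (H (Id ?X) (Id ?P)) ?N23)) (A (C ?X ?P) ?Q ?T))"
    by (rule cV2[OF sy[OF vas]]) auto
  also have "\<dots> \<approx> V (H (Id ?X) ?N1) (V (V (H (Id ?X) (H (Id ?P) ?N23)) (A ?X ?P (C ?Q ?T))) (A (C ?X ?P) ?Q ?T))"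
    by (rule cV2[OF cV1[OF anat]]) auto
  also have "\<dots> \<approx> V (H (Id ?X) ?N1) (V (H (Id ?X) (H (Id ?P) ?N23)) (V (A ?X ?P (C ?Q ?T)) (A (C ?X ?P) ?Q ?T)))"
    by (rule cV2[OF vas]) auto
  also have "\<dots> \<approx> V (H (Id ?X) ?N1) (V (H (Id ?X) (H (Id ?P) ?N23)) (V (H (Id ?X) (A ?P ?Q ?T)) ?Z))"
    by (rule cV2[OF cV2[OF pentagon]]) auto
  also have "\<dots> \<approx> V (H (Id ?X) ?N1) (V (V (H (Id ?X) (H (Id ?P) ?N23)) (H (Id ?X) (A ?P ?Q ?T))) ?Z)"
    by (rule cV2[OF sy[OF vas]]) auto
  also have "\<dots> \<approx> V (H (Id ?X) ?N1) (V (H (Id ?X) (V (H (Id ?P) ?N23) (A ?P ?Q ?T))) ?Z)"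
    by (rule cV2[OF cV1[OF sy[OF wl]]]) auto
  also have "\<dots> \<approx> V (V (H (Id ?X) ?N1) (H (Id ?X) (V (H (Id ?P) ?N23) (A ?P ?Q ?T)))) ?Z"
    by (rule sy[OF vas]) auto
  also have "\<dots> \<approx> V (H (Id ?X) (V ?N1 (V (H (Id ?P) ?N23) (A ?P ?Q ?T)))) ?Z"
    by (rule cV1[OF sy[OF wl]]) auto
  also have "\<dots> \<approx> V (H (Id ?X) (V ?N' (H ?N12 (Id ?T)))) ?Z"
    by (rule cV1[OF cH2[OF IH]]) auto
  also have "\<dots> \<approx> V (V (H (Id ?X) ?N') (H (Id ?X) (H ?N12 (Id ?T)))) ?Z"
    by (rule cV1[OF wl]) auto
  also have "\<dots> \<approx> V (H (Id ?X) ?N') (V (H (Id ?X) (H ?N12 (Id ?T))) ?Z)"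
    by (rule vas) auto
  also have "\<dots> \<approx> V (H (Id ?X) ?N') (V (V (H (Id ?X) (H ?N12 (Id ?T))) (A ?X (C ?P ?Q) ?T)) (H (A ?X ?P ?Q) (Id ?T)))"
    by (rule cV2[OF sy[OF vas]]) auto
  also have "\<dots> \<approx> V (H (Id ?X) ?N') (V (V (A ?X ?R' ?T) (H (H (Id ?X) ?N12) (Id ?T))) (H (A ?X ?P ?Q) (Id ?T)))"
    by (rule cV2[OF cV1[OF sy[OF anat]]]) auto
  also have "\<dots> \<approx> V (H (Id ?X) ?N') (V (A ?X ?R' ?T) (V (H (H (Id ?X) ?N12) (Id ?T)) (H (A ?X ?P ?Q) (Id ?T))))"
    by (rule cV2[OF vas]) auto
  also have "\<dots> \<approx> V (H (Id ?X) ?N') (V (A ?X ?R' ?T) (H (V (H (Id ?X) ?N12) (A ?X ?P ?Q)) (Id ?T)))"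
    by (rule cV2[OF cV2[OF sy[OF wr]]]) auto
  also have "\<dots> \<approx> V (V (H (Id ?X) ?N') (A ?X ?R' ?T)) (H (V (H (Id ?X) ?N12) (A ?X ?P ?Q)) (Id ?T))"
    by (rule sy[OF vas]) auto
  finally show ?case by simp
qed

end

locale coh = pres S Rel for S :: "('v,'g,'x) sig" and Rel +
  fixes gn :: "'g \<Rightarrow> 'g list" and gc :: "'g \<Rightarrow> ('v,'g,'x) c2"
  assumes gc: "g \<in> sg S \<Longrightarrow> ok2 S (gc g) \<and> dom2 S (gc g) = G g \<and> cod2 S (gc g) = real (sgs S g) (gn g) \<and> iso (gc g)"
  and gx_nf: "x \<in> sx S \<Longrightarrow> nf gn (sxd S x) = nf gn (sxc S x)"
  and gx: "x \<in> sx S \<Longrightarrow> V (can S gn gc (sxc S x)) (X x) \<approx> can S gn gc (sxd S x)"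
begin

abbreviation "cn \<equiv> can S gn gc"
abbreviation "nff \<equiv> nf gn"

lemma can_typ: "ok1 S f \<Longrightarrow> ok2 S (cn f) \<and> dom2 S (cn f) = f \<and> cod2 S (cn f) = real (src1 S f) (nff f) \<and> iso (cn f)"
proof (induction f)
  case (U x)
  then show ?case by (auto intro: iso_Id)
next
  case (G x)
  then show ?case using gc[of x] by auto
next
  case (C g1 f1)
  then have o: "ok1 S g1" "ok1 S f1" "src1 S g1 = tgt1 S f1" by auto
  have tg: "ok1 S (real (src1 S g1) (nff g1))" "tgt1 S (real (src1 S g1) (nff g1)) = tgt1 S g1"
    using C.IH(1)[OF o(1)] tp[of "cn g1"] by auto
  have tf: "ok1 S (real (src1 S f1) (nff f1))" "tgt1 S (real (src1 S f1) (nff f1)) = tgt1 S f1"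
    using C.IH(2)[OF o(2)] tp[of "cn f1"] by auto
  have n: "ok2 S (nu (src1 S g1) (src1 S f1) (nff g1) (nff f1))"
     "dom2 S (nu (src1 S g1) (src1 S f1) (nff g1) (nff f1)) = C (real (src1 S g1) (nff g1)) (real (src1 S f1) (nff f1))"
     "cod2 S (nu (src1 S g1) (src1 S f1) (nff g1) (nff f1)) = real (src1 S f1) (nff g1 @ nff f1)"
     "iso (nu (src1 S g1) (src1 S f1) (nff g1) (nff f1))"
    using nu_typ[OF tg(1) tf(1)] tf o by auto
  show ?case using n C.IH(1)[OF o(1)] C.IH(2)[OF o(2)] o tg tf by (auto intro!: iso_V iso_H)
qed


lemma can_ok[simp]: "ok1 S f \<Longrightarrow> ok2 S (cn f)" using can_typ by blast
lemma can_dom[simp]: "ok1 S f \<Longrightarrow> dom2 S (cn f) = f" using can_typ by blast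
lemma can_cod[simp]: "ok1 S f \<Longrightarrow> cod2 S (cn f) = real (src1 S f) (nff f)" using can_typ by blast
lemma can_iso: "ok1 S f \<Longrightarrow> iso (cn f)" using can_typ by blast
lemma can_real[simp]: "ok1 S f \<Longrightarrow> ok1 S (real (src1 S f) (nff f))"
  using tp[of "cn f"] by simp
lemma can_real_tgt[simp]: "ok1 S f \<Longrightarrow> tgt1 S (real (src1 S f) (nff f)) = tgt1 S f"
  using tp[of "cn f"] by simp

lemma compat_A: assumes h: "ok1 S h" and g: "ok1 S g" and f: "ok1 S f"
  and hg: "src1 S h = tgt1 S g" and gf: "src1 S g = tgt1 S f"
  shows "V (cn (C h (C g f))) (A h g f) \<approx> cn (C (C h g) f)"
proof -
  note [simp] = h g f hg[symmetric] gf[symmetric]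
  let ?rh = "real (src1 S h) (nff h)" and ?rg = "real (src1 S g) (nff g)" and ?rf = "real (src1 S f) (nff f)"
  let ?Nh = "nu (src1 S h) (src1 S f) (nff h) (nff g @ nff f)" and ?N23 = "nu (src1 S g) (src1 S f) (nff g) (nff f)"
  let ?N' = "nu (src1 S g) (src1 S f) (nff h @ nff g) (nff f)" and ?N12 = "nu (src1 S h) (src1 S g) (nff h) (nff g)"
  have [simp]: "src1 S g \<in> sv S" "src1 S f \<in> sv S" "src1 S h \<in> sv S" by auto
  have na: "V ?Nh (V (H (Id ?rh) ?N23) (A ?rh ?rg ?rf)) \<approx> V ?N' (H ?N12 (Id ?rf))"
    by (rule nu_assoc) simp_all
  have r0: "ok1 S (real (src1 S f) (nff g @ nff f)) \<and> tgt1 S (real (src1 S f) (nff g @ nff f)) = tgt1 S (real (src1 S g) (nff g))"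
    by (rule real_app[OF can_real[OF g] can_real[OF f]]) simp
  have r[simp]: "ok1 S (real (src1 S f) (nff g @ nff f))" "tgt1 S (real (src1 S f) (nff g @ nff f)) = src1 S h"
    using r0 can_real_tgt[OF g] by simp_all
  have r1: "ok1 S (real (src1 S g) (nff h @ nff g)) \<and> tgt1 S (real (src1 S g) (nff h @ nff g)) = tgt1 S (real (src1 S h) (nff h))"
    by (rule real_app[OF can_real[OF h] can_real[OF g]]) simp
  have r'[simp]: "ok1 S (real (src1 S g) (nff h @ nff g))" "tgt1 S (real (src1 S g) (nff h @ nff g)) = tgt1 S h"
    using r1 can_real_tgt[OF h] by simp_all
  have "V (cn (C h (C g f))) (A h g f) = V (V ?Nh (H (cn h) (V ?N23 (H (cn g) (cn f))))) (A h g f)" by simp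
  also have "\<dots> \<approx> V ?Nh (V (H (cn h) (V ?N23 (H (cn g) (cn f)))) (A h g f))"
    by (rule vas) simp
  also have "\<dots> \<approx> V ?Nh (V (H (V (Id ?rh) (cn h)) (V ?N23 (H (cn g) (cn f)))) (A h g f))"
    by (rule cV2[OF cV1[OF cH1[OF sy[OF idl]]]]) auto
  also have "\<dots> \<approx> V ?Nh (V (V (H (Id ?rh) ?N23) (H (cn h) (H (cn g) (cn f)))) (A h g f))"
    by (rule cV2[OF cV1[OF ich]]) auto
  also have "\<dots> \<approx> V ?Nh (V (H (Id ?rh) ?N23) (V (H (cn h) (H (cn g) (cn f))) (A h g f)))"
    by (rule cV2[OF vas]) auto
  also have "\<dots> \<approx> V ?Nh (V (H (Id ?rh) ?N23) (V (A ?rh ?rg ?rf) (H (H (cn h) (cn g)) (cn f))))"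
    by (rule cV2[OF cV2[OF sy[OF anat]]]) auto
  also have "\<dots> \<approx> V ?Nh (V (V (H (Id ?rh) ?N23) (A ?rh ?rg ?rf)) (H (H (cn h) (cn g)) (cn f)))"
    by (rule cV2[OF sy[OF vas]]) auto
  also have "\<dots> \<approx> V (V ?Nh (V (H (Id ?rh) ?N23) (A ?rh ?rg ?rf))) (H (H (cn h) (cn g)) (cn f))"
    by (rule sy[OF vas]) auto
  also have "\<dots> \<approx> V (V ?N' (H ?N12 (Id ?rf))) (H (H (cn h) (cn g)) (cn f))"
    by (rule cV1[OF na]) auto
  also have "\<dots> \<approx> V ?N' (V (H ?N12 (Id ?rf)) (H (H (cn h) (cn g)) (cn f)))"
    by (rule vas) auto
  also have "\<dots> \<approx> V ?N' (H (V ?N12 (H (cn h) (cn g))) (V (Id ?rf) (cn f)))"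
    by (rule cV2[OF sy[OF ich]]) auto
  also have "\<dots> \<approx> V ?N' (H (V ?N12 (H (cn h) (cn g))) (cn f))"
    by (rule cV2[OF cH2[OF idl]]) auto
  finally show ?thesis by simp
qed

lemma compat_L: assumes f: "ok1 S f" shows "V (cn f) (L f) \<approx> cn (C (U (tgt1 S f)) f)"
proof -
  have "V (cn f) (L f) \<approx> V (L (real (src1 S f) (nff f))) (H (Id (U (tgt1 S f))) (cn f))"
    by (rule sy[OF lnat]) (use f in auto)
  thus ?thesis by simp
qed

lemma compat_R: assumes f: "ok1 S f" shows "V (cn f) (R f) \<approx> cn (C f (U (src1 S f)))"
proof -
  have [simp]: "src1 S f \<in> sv S" using f by simp
  have "V (cn f) (R f) \<approx> V (R (real (src1 S f) (nff f))) (H (cn f) (Id (U (src1 S f))))"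
    by (rule sy[OF rnat]) (use f in auto)
  also have "\<dots> \<approx> V (nu (src1 S f) (src1 S f) (nff f) []) (H (cn f) (Id (U (src1 S f))))"
    by (rule cV1[OF sy[OF nuR]]) (use f in auto)
  finally show ?thesis by simp
qed

lemma compat_inv: assumes i: "inv_pair a b" and c: "V (cn (cod2 S a)) a \<approx> cn (dom2 S a)"
  shows "V (cn (cod2 S b)) b \<approx> cn (dom2 S b)"
proof -
  have o: "ok2 S a" "ok2 S b" "dom2 S b = cod2 S a" "cod2 S b = dom2 S a" "V a b \<approx> Id (cod2 S a)"
    using i by (auto simp: inv_pair_def)
  have t: "ok1 S (dom2 S a)" "ok1 S (cod2 S a)" using tp[OF o(1)] by auto
  have "V (cn (cod2 S b)) b = V (cn (dom2 S a)) b" using o by simp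
  also have "\<dots> \<approx> V (V (cn (cod2 S a)) a) b" by (rule cV1[OF sy[OF c]]) (use o t in auto)
  also have "\<dots> \<approx> V (cn (cod2 S a)) (V a b)" by (rule vas) (use o t in auto)
  also have "\<dots> \<approx> V (cn (cod2 S a)) (Id (cod2 S a))" by (rule cV2[OF o(5)]) (use o t in auto)
  also have "\<dots> \<approx> cn (cod2 S a)" by (rule idr) (use o t in auto)
  finally show ?thesis using o by simp
qed

lemma compat: "ok2 S a \<Longrightarrow> nff (dom2 S a) = nff (cod2 S a) \<and> V (cn (cod2 S a)) a \<approx> cn (dom2 S a)"
proof (induction a)
  case (Id f)
  then show ?case by (auto intro: idr)
next
  case (V b a)
  then have o: "ok2 S b" "ok2 S a" "cod2 S a = dom2 S b" by auto
  note ih = V.IH(1)[OF o(1)] V.IH(2)[OF o(2)]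
  have t: "ok1 S (dom2 S a)" "ok1 S (cod2 S a)" "ok1 S (cod2 S b)" using tp o by auto
  have "V (cn (cod2 S b)) (V b a) \<approx> V (V (cn (cod2 S b)) b) a" by (rule sy[OF vas]) (use o t in auto)
  also have "\<dots> \<approx> V (cn (dom2 S b)) a" by (rule cV1) (use o t ih in auto)
  also have "\<dots> \<approx> cn (dom2 S a)" using ih o by simp
  finally show ?case using ih o by simp
next
  case (H b a)
  then have o: "ok2 S b" "ok2 S a" "src1 S (dom2 S b) = tgt1 S (dom2 S a)" by auto
  note ih = H.IH(1)[OF o(1)] H.IH(2)[OF o(2)]
  have t: "ok1 S (dom2 S a)" "ok1 S (cod2 S a)" "ok1 S (cod2 S b)" "ok1 S (dom2 S b)"
    "src1 S (cod2 S a) = src1 S (dom2 S a)" "src1 S (cod2 S b) = src1 S (dom2 S b)"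
    "tgt1 S (cod2 S a) = tgt1 S (dom2 S a)" "tgt1 S (cod2 S b) = tgt1 S (dom2 S b)" using tp o by auto
  have e: "nff (cod2 S a) = nff (dom2 S a)" "nff (cod2 S b) = nff (dom2 S b)" using ih by auto
  have c: "V (cn (cod2 S b)) b \<approx> cn (dom2 S b)" "V (cn (cod2 S a)) a \<approx> cn (dom2 S a)" using ih by auto
  let ?N = "nu (src1 S (dom2 S b)) (src1 S (dom2 S a)) (nff (dom2 S b)) (nff (dom2 S a))"
  have [simp]: "src1 S (dom2 S a) \<in> sv S" using t by simp
  have "V (cn (cod2 S (H b a))) (H b a) = V (V ?N (H (cn (cod2 S b)) (cn (cod2 S a)))) (H b a)"
    using t e by simp
  also have "\<dots> \<approx> V ?N (V (H (cn (cod2 S b)) (cn (cod2 S a))) (H b a))"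
    by (rule vas) (use o(1,2) o(3)[symmetric] t e in auto)
  also have "\<dots> \<approx> V ?N (H (V (cn (cod2 S b)) b) (V (cn (cod2 S a)) a))"
    by (rule cV2[OF sy[OF ich]]) (use o(1,2) o(3)[symmetric] t e in auto)
  also have "\<dots> \<approx> V ?N (H (cn (dom2 S b)) (cn (dom2 S a)))"
    by (rule cV2[OF cH[OF c]]) (use o(1,2) o(3)[symmetric] t e in auto)
  finally show ?case using e by simp
next
  case (A h g f)
  then show ?case using compat_A by auto
next
  case (Ai h g f)
  then have "inv_pair (A h g f) (Ai h g f)" by (auto intro: inv_A)
  then show ?case using compat_inv[of "A h g f" "Ai h g f"] compat_A Ai by auto
next
  case (L f)
  then show ?case using compat_L by auto
next
  case (Li f)
  then have "inv_pair (L f) (Li f)" by (auto intro: inv_L)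
  then show ?case using compat_inv[of "L f" "Li f"] compat_L Li by auto
next
  case (R f)
  then show ?case using compat_R by auto
next
  case (Ri f)
  then have "inv_pair (R f) (Ri f)" by (auto intro: inv_R)
  then show ?case using compat_inv[of "R f" "Ri f"] compat_R Ri by auto
next
  case (X x)
  then show ?case using gx gx_nf by auto
qed

theorem thin: "hom_thin S Rel"
  unfolding hom_thin_def
proof (intro allI impI)
  fix a b assume h: "ok2 S a \<and> ok2 S b \<and> dom2 S a = dom2 S b \<and> cod2 S a = cod2 S b"
  then have t: "ok1 S (cod2 S a)" using tp by blast
  have "V (cn (cod2 S a)) a \<approx> cn (dom2 S a)" using compat h by blast
  also have "\<dots> \<approx> V (cn (cod2 S a)) b" using compat[of b] h by (auto intro: sy)
  finally show "a \<approx> b" by (rule cancel_l[OF can_iso[OF t]]) (use h t in auto)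
qed

end



context pres begin

lemma inv_unique: assumes i: "inv_pair k t" and j: "inv_pair k' t'" and e: "k \<approx> k'" shows "t \<approx> t'"
proof -
  have o: "ok2 S k" "ok2 S t" "dom2 S t = cod2 S k" "cod2 S t = dom2 S k" "V t k \<approx> Id (dom2 S k)"
    "V k t \<approx> Id (cod2 S k)" using i by (auto simp: inv_pair_def)
  have p: "ok2 S k'" "ok2 S t'" "dom2 S t' = cod2 S k'" "cod2 S t' = dom2 S k'" "V t' k' \<approx> Id (dom2 S k')"
    "V k' t' \<approx> Id (cod2 S k')" using j by (auto simp: inv_pair_def)
  have d: "dom2 S k' = dom2 S k" "cod2 S k' = cod2 S k" using eqD[OF e] by auto
  have "t \<approx> V t (Id (cod2 S k))" by (rule sy[OF idr]) (use o in auto)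
  also have "\<dots> \<approx> V t (V k' t')" by (rule cV2[OF sy]) (use o p d in auto)
  also have "\<dots> \<approx> V t (V k t')" by (rule cV2[OF cV1[OF sy[OF e]]]) (use o p d in auto)
  also have "\<dots> \<approx> V (V t k) t'" by (rule sy[OF vas]) (use o p d in auto)
  also have "\<dots> \<approx> V (Id (dom2 S k)) t'" by (rule cV1[OF o(5)]) (use o p d in auto)
  also have "\<dots> \<approx> t'" by (rule idl) (use o p d in auto)
  finally show ?thesis .
qed

lemma move_inv: assumes i: "inv_pair a b" and c: "V k1 a \<approx> k0" shows "V k0 b \<approx> k1"
proof -
  have o: "ok2 S a" "ok2 S b" "dom2 S b = cod2 S a" "cod2 S b = dom2 S a" "V a b \<approx> Id (cod2 S a)"
    using i by (auto simp: inv_pair_def)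
  have k: "ok2 S k1" "dom2 S k1 = cod2 S a" "dom2 S k0 = dom2 S a" using eqD[OF c] by auto
  have "V k0 b \<approx> V (V k1 a) b" by (rule cV1[OF sy[OF c]]) (use o k in auto)
  also have "\<dots> \<approx> V k1 (V a b)" by (rule vas) (use o k in auto)
  also have "\<dots> \<approx> V k1 (Id (cod2 S a))" by (rule cV2[OF o(5)]) (use o k in auto)
  also have "\<dots> \<approx> k1" by (rule idr) (use o k in auto)
  finally show ?thesis .
qed

lemma swap: assumes c: "inv_pair c c'" and d: "inv_pair d d'" and e: "V b d \<approx> V c a"
  shows "V c' b \<approx> V a d'"
proof -
  have oc: "ok2 S c" "ok2 S c'" "dom2 S c' = cod2 S c" "cod2 S c' = dom2 S c" "V c' c \<approx> Id (dom2 S c)"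
    using c by (auto simp: inv_pair_def)
  have od: "ok2 S d" "ok2 S d'" "dom2 S d' = cod2 S d" "cod2 S d' = dom2 S d" "V d d' \<approx> Id (cod2 S d)"
    using d by (auto simp: inv_pair_def)
  have t: "ok2 S (V b d)" "ok2 S (V c a)" "dom2 S d = dom2 S a" "cod2 S b = cod2 S c" using eqD[OF e] by auto
  have "V c' b \<approx> V (V c' b) (Id (cod2 S d))" by (rule sy[OF idr]) (use oc od t in auto)
  also have "\<dots> \<approx> V (V c' b) (V d d')" by (rule cV2[OF sy[OF od(5)]]) (use oc od t in auto)
  also have "\<dots> \<approx> V c' (V b (V d d'))" by (rule vas) (use oc od t in auto)
  also have "\<dots> \<approx> V c' (V (V b d) d')" by (rule cV2[OF sy[OF vas]]) (use oc od t in auto)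
  also have "\<dots> \<approx> V c' (V (V c a) d')" by (rule cV2[OF cV1[OF e]]) (use oc od t in auto)
  also have "\<dots> \<approx> V c' (V c (V a d'))" by (rule cV2[OF vas]) (use oc od t in auto)
  also have "\<dots> \<approx> V (V c' c) (V a d')" by (rule sy[OF vas]) (use oc od t in auto)
  also have "\<dots> \<approx> V (Id (dom2 S c)) (V a d')" by (rule cV1[OF oc(5)]) (use oc od t in auto)
  also have "\<dots> \<approx> V a d'" by (rule idl) (use oc od t in auto)
  finally show ?thesis .
qed

end

lemma FS_simps[simp]: "sv (FS Gr) = verts Gr" "sg (FS Gr) = arcs Gr" "sgs (FS Gr) = gsrc Gr"
  "sgt (FS Gr) = gtgt Gr" "sx (FS Gr) = {}"
  by (auto simp: FS_def)

lemma MS_simps[simp]: "sv (MS Gr Mg hv he) = verts Mg"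
  "(Inl m \<in> sg (MS Gr Mg hv he)) = (m \<in> arcs Mg)"
  "(Inr w \<in> sg (MS Gr Mg hv he)) = (ok1 (FS Gr) w \<and> (\<forall>e. w \<noteq> G e))"
  "sgs (MS Gr Mg hv he) (Inl m) = gsrc Mg m" "sgt (MS Gr Mg hv he) (Inl m) = gtgt Mg m"
  "sgs (MS Gr Mg hv he) (Inr w) = hv (src1 (FS Gr) w)" "sgt (MS Gr Mg hv he) (Inr w) = hv (tgt1 (FS Gr) w)"
  "(PhiMap a \<in> sx (MS Gr Mg hv he)) = ok2 (FS Gr) a"
  "(PhiC g f \<in> sx (MS Gr Mg hv he)) = (ok1 (FS Gr) g \<and> ok1 (FS Gr) f \<and> src1 (FS Gr) g = tgt1 (FS Gr) f)"
  "(PhiCi g f \<in> sx (MS Gr Mg hv he)) = (ok1 (FS Gr) g \<and> ok1 (FS Gr) f \<and> src1 (FS Gr) g = tgt1 (FS Gr) f)"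
  "(PhiU v \<in> sx (MS Gr Mg hv he)) = (v \<in> verts Gr)"
  "(PhiUi v \<in> sx (MS Gr Mg hv he)) = (v \<in> verts Gr)"
  "sxd (MS Gr Mg hv he) = mxd hv he Gr" "sxc (MS Gr Mg hv he) = mxc hv he Gr"
  by (auto simp: MS_def)

lemma wfsig_FS: "wf_graph Gr \<Longrightarrow> wfsig (FS Gr)"
  by (auto simp: wfsig_def wf_graph_def)

definition mp :: "('b \<Rightarrow> 'd) \<Rightarrow> 'b list \<Rightarrow> ('d + ('a,'b) w1) list" where
  "mp he l = map (Inl \<circ> he) l"

lemma mp_simps[simp]: "mp he [] = []" "mp he (e#l) = Inl (he e) # mp he l" "mp he (l1@l2) = mp he l1 @ mp he l2"
  by (auto simp: mp_def)

fun chi :: "('b \<Rightarrow> 'd) \<Rightarrow> 'a \<Rightarrow> 'b list \<Rightarrow> ('c, 'd + ('a,'b) w1, ('a,'b) mx) c2" where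
  "chi he s [] = X (PhiU s)"
| "chi he s (e#l) = V (X (PhiC (G e) (real s l))) (H (Id (G (Inl (he e)))) (chi he s l))"
fun psi :: "('b \<Rightarrow> 'd) \<Rightarrow> 'a \<Rightarrow> 'b list \<Rightarrow> ('c, 'd + ('a,'b) w1, ('a,'b) mx) c2" where
  "psi he s [] = X (PhiUi s)"
| "psi he s (e#l) = V (H (Id (G (Inl (he e)))) (psi he s l)) (X (PhiCi (G e) (real s l)))"

abbreviation nfF :: "('a,'b) w1 \<Rightarrow> 'b list" where "nfF \<equiv> nf (\<lambda>e. [e])"
abbreviation canF :: "('a,'b) graph \<Rightarrow> ('a,'b) w1 \<Rightarrow> ('a,'b,unit) c2" where
  "canF Gr \<equiv> can (FS Gr) (\<lambda>e. [e]) (\<lambda>e. Ri (G e))"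

definition phican :: "('a,'b) graph \<Rightarrow> ('b \<Rightarrow> 'd) \<Rightarrow> ('a,'b) w1 \<Rightarrow> ('c, 'd + ('a,'b) w1, ('a,'b) mx) c2" where
  "phican Gr he w = V (psi he (src1 (FS Gr) w) (nfF w)) (X (PhiMap (canF Gr w)))"

fun gnM :: "('b \<Rightarrow> 'd) \<Rightarrow> 'd + ('a,'b) w1 \<Rightarrow> ('d + ('a,'b) w1) list" where
  "gnM he (Inl m) = [Inl m]" | "gnM he (Inr w) = mp he (nfF w)"
fun gcM :: "('a,'b) graph \<Rightarrow> ('b \<Rightarrow> 'd) \<Rightarrow> 'd + ('a,'b) w1 \<Rightarrow> ('c, 'd + ('a,'b) w1, ('a,'b) mx) c2" where
  "gcM Gr he (Inl m) = Ri (G (Inl m))" | "gcM Gr he (Inr w) = phican Gr he w"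

locale mh =
  fixes Gr :: "('a,'b) graph" and Mg :: "('c,'d) graph" and hv :: "'a \<Rightarrow> 'c" and he :: "'b \<Rightarrow> 'd"
  assumes wg: "wf_graph Gr" and wm: "wf_graph Mg" and gh: "graph_hom Gr Mg hv he"
begin

abbreviation "FG \<equiv> FS Gr"
abbreviation "MH \<equiv> MS Gr Mg hv he"
abbreviation "R0 \<equiv> (\<lambda>_ _. False) :: ('a,'b,unit) c2 \<Rightarrow> ('a,'b,unit) c2 \<Rightarrow> bool"

sublocale F: pres FG R0 by unfold_locales (rule wfsig_FS[OF wg])

lemma Ri_inv: "e \<in> arcs Gr \<Longrightarrow> F.iso (Ri (G e))"
  using F.inv_R[of "G e"] F.inv_iso by auto

sublocale F: coh FG R0 "\<lambda>e. [e]" "\<lambda>e. Ri (G e)"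
  by unfold_locales (auto intro: Ri_inv)


abbreviation "Rm \<equiv> mrel Gr hv he"
abbreviation meq (infix "\<cong>" 50) where "a \<cong> b \<equiv> beq MH Rm a b"
abbreviation fq (infix "\<sim>" 50) where "a \<sim> b \<equiv> beq FG R0 a b"

lemma ghv: "v \<in> verts Gr \<Longrightarrow> hv v \<in> verts Mg" using gh by (auto simp: graph_hom_def)
lemma ghe: "e \<in> arcs Gr \<Longrightarrow> he e \<in> arcs Mg \<and> gsrc Mg (he e) = hv (gsrc Gr e) \<and> gtgt Mg (he e) = hv (gtgt Gr e)"
  using gh by (auto simp: graph_hom_def)

lemma phi1_typ: "ok1 FG w \<Longrightarrow> ok1 MH (phi1 he w) \<and> src1 MH (phi1 he w) = hv (src1 FG w) \<and> tgt1 MH (phi1 he w) = hv (tgt1 FG w)"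
  by (cases w) (auto simp: ghe)

lemma phi1_ok[simp]: "ok1 FG w \<Longrightarrow> ok1 MH (phi1 he w)" using phi1_typ by blast
lemma phi1_src[simp]: "ok1 FG w \<Longrightarrow> src1 MH (phi1 he w) = hv (src1 FG w)" using phi1_typ by blast
lemma phi1_tgt[simp]: "ok1 FG w \<Longrightarrow> tgt1 MH (phi1 he w) = hv (tgt1 FG w)" using phi1_typ by blast

lemma fsv: "ok1 FG f \<Longrightarrow> src1 FG f \<in> verts Gr" "ok1 FG f \<Longrightarrow> tgt1 FG f \<in> verts Gr"
  using F.sv1 by auto

lemma wfsig_MH: "wfsig MH"
proof -
  have 1: "\<forall>g\<in>sg MH. sgs MH g \<in> sv MH \<and> sgt MH g \<in> sv MH"
  proof
    fix g assume "g \<in> sg MH"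
    then show "sgs MH g \<in> sv MH \<and> sgt MH g \<in> sv MH"
      using wm by (cases g) (auto simp: wf_graph_def intro!: ghv fsv)
  qed
  have 2: "\<forall>x\<in>sx MH. ok1 MH (sxd MH x) \<and> ok1 MH (sxc MH x) \<and> src1 MH (sxd MH x) = src1 MH (sxc MH x) \<and>
        tgt1 MH (sxd MH x) = tgt1 MH (sxc MH x)"
  proof
    fix x assume x: "x \<in> sx MH"
    show "ok1 MH (sxd MH x) \<and> ok1 MH (sxc MH x) \<and> src1 MH (sxd MH x) = src1 MH (sxc MH x) \<and>
        tgt1 MH (sxd MH x) = tgt1 MH (sxc MH x)"
    proof (cases x)
      case (PhiMap a)
      then show ?thesis using x F.tp[of a] by auto
    qed (use x ghv in auto)
  qed
  show ?thesis using 1 2 by (simp add: wfsig_def)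
qed

sublocale M: pres MH Rm by unfold_locales (rule wfsig_MH)

lemma rl: "Rm a b \<Longrightarrow> ok2 MH a \<Longrightarrow> ok2 MH b \<Longrightarrow> dom2 MH a = dom2 MH b \<Longrightarrow> cod2 MH a = cod2 MH b \<Longrightarrow> a \<cong> b"
  by (rule beq.gen) auto

lemma r_cinv1: "ok1 FG g \<Longrightarrow> ok1 FG f \<Longrightarrow> src1 FG g = tgt1 FG f \<Longrightarrow>
   V (X (PhiCi g f)) (X (PhiC g f)) \<cong> Id (C (phi1 he g) (phi1 he f))"
  by (rule rl) (auto intro: mrel.cinv1)
lemma r_cinv2: "ok1 FG g \<Longrightarrow> ok1 FG f \<Longrightarrow> src1 FG g = tgt1 FG f \<Longrightarrow>
   V (X (PhiC g f)) (X (PhiCi g f)) \<cong> Id (phi1 he (C g f))"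
  by (rule rl[OF mrel.cinv2]) auto
lemma r_uinv1: "v \<in> verts Gr \<Longrightarrow> V (X (PhiUi v)) (X (PhiU v)) \<cong> Id (U (hv v))"
  by (rule rl) (auto intro: mrel.uinv1 ghv)
lemma r_uinv2: "v \<in> verts Gr \<Longrightarrow> V (X (PhiU v)) (X (PhiUi v)) \<cong> Id (phi1 he (U v))"
  by (rule rl[OF mrel.uinv2]) (auto intro: ghv)
lemma r_fid: "ok1 FG w \<Longrightarrow> X (PhiMap (Id w)) \<cong> Id (phi1 he w)"
  by (rule rl) (auto intro: mrel.fid)
lemma r_fcomp: "ok2 FG (V b a) \<Longrightarrow> X (PhiMap (V b a)) \<cong> V (X (PhiMap b)) (X (PhiMap a))"
  by (rule rl) (auto intro: mrel.fcomp)
lemma r_resp: "a \<sim> b \<Longrightarrow> X (PhiMap a) \<cong> X (PhiMap b)"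
  by (rule rl) (auto intro: mrel.resp dest: F.eqD)
lemma r_cnat: "ok2 FG (H b a) \<Longrightarrow>
  V (X (PhiC (cod2 FG b) (cod2 FG a))) (H (X (PhiMap b)) (X (PhiMap a))) \<cong> V (X (PhiMap (H b a))) (X (PhiC (dom2 FG b) (dom2 FG a)))"
  using F.tp[of a] F.tp[of b] by (intro rl) (auto intro: mrel.cnat)
lemma r_assoc: "ok1 FG h \<Longrightarrow> ok1 FG g \<Longrightarrow> ok1 FG f \<Longrightarrow> src1 FG h = tgt1 FG g \<Longrightarrow> src1 FG g = tgt1 FG f \<Longrightarrow>
  V (X (PhiMap (A h g f))) (V (X (PhiC (C h g) f)) (H (X (PhiC h g)) (Id (phi1 he f))))
  \<cong> V (X (PhiC h (C g f))) (V (H (Id (phi1 he h)) (X (PhiC g f))) (A (phi1 he h) (phi1 he g) (phi1 he f)))"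
  by (rule rl) (auto intro: mrel.assoc)
lemma r_lunit: "ok1 FG f \<Longrightarrow>
  V (X (PhiMap (L f))) (V (X (PhiC (U (tgt1 FG f)) f)) (H (X (PhiU (tgt1 FG f))) (Id (phi1 he f)))) \<cong> L (phi1 he f)"
  by (rule rl) (auto intro: mrel.lunit ghv fsv)
lemma r_runit: "ok1 FG f \<Longrightarrow>
  V (X (PhiMap (R f))) (V (X (PhiC f (U (src1 FG f)))) (H (Id (phi1 he f)) (X (PhiU (src1 FG f))))) \<cong> R (phi1 he f)"
  by (rule rl) (auto intro: mrel.runit ghv fsv)


lemma realM: "ok1 FG (real s l) \<Longrightarrow> ok1 MH (real (hv s) (mp he l)) \<and> tgt1 MH (real (hv s) (mp he l)) = hv (tgt1 FG (real s l))"
  by (induction l) (auto simp: ghe ghv)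

lemma realM_ok[simp]: "ok1 FG (real s l) \<Longrightarrow> ok1 MH (real (hv s) (mp he l))" using realM by blast
lemma realM_tgt[simp]: "ok1 FG (real s l) \<Longrightarrow> tgt1 MH (real (hv s) (mp he l)) = hv (tgt1 FG (real s l))" using realM by blast

lemma inv_PhiC: "ok1 FG g \<Longrightarrow> ok1 FG f \<Longrightarrow> src1 FG g = tgt1 FG f \<Longrightarrow> M.inv_pair (X (PhiC g f)) (X (PhiCi g f))"
  unfolding M.inv_pair_def using r_cinv1[of g f] r_cinv2[of g f] by simp
lemma inv_PhiU: "v \<in> verts Gr \<Longrightarrow> M.inv_pair (X (PhiU v)) (X (PhiUi v))"
  unfolding M.inv_pair_def using r_uinv1[of v] r_uinv2[of v] by simp

lemma chi_typ: "ok1 FG (real s l) \<Longrightarrow> ok2 MH (chi he s l) \<and> dom2 MH (chi he s l) = real (hv s) (mp he l)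
   \<and> cod2 MH (chi he s l) = phi1 he (real s l) \<and> M.inv_pair (chi he s l) (psi he s l)"
proof (induction l)
  case Nil
  then show ?case using inv_PhiU[of s] by simp
next
  case (Cons e l)
  then have h: "ok1 FG (real s l)" "e \<in> arcs Gr" "gsrc Gr e = tgt1 FG (real s l)" by auto
  note ih = Cons.IH[OF h(1)]
  have i1: "M.inv_pair (H (Id (G (Inl (he e)))) (chi he s l)) (H (Id (G (Inl (he e)))) (psi he s l))"
    by (rule M.inv_H[OF _ M.inv_Id]) (use ih h ghe[OF h(2)] in auto)
  have i2: "M.inv_pair (X (PhiC (G e) (real s l))) (X (PhiCi (G e) (real s l)))"
    by (rule inv_PhiC) (use h in auto)
  have ip: "M.inv_pair (V (X (PhiC (G e) (real s l))) (H (Id (G (Inl (he e)))) (chi he s l)))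
     (V (H (Id (G (Inl (he e)))) (psi he s l)) (X (PhiCi (G e) (real s l))))"
    by (rule M.inv_V[OF i1 i2]) (use ih h in auto)
  have ok: "ok2 MH (chi he s (e#l))" using M.iso_ok[OF M.inv_iso(1)[OF ip]] by simp
  have d: "dom2 MH (chi he s (e#l)) = real (hv s) (mp he (e#l))" using ih h by simp
  have c: "cod2 MH (chi he s (e#l)) = phi1 he (real s (e#l))" by simp
  show ?case using ok d c ip by simp
qed

lemma chi_ok[simp]: "ok1 FG (real s l) \<Longrightarrow> ok2 MH (chi he s l)" using chi_typ by blast
lemma chi_dom[simp]: "ok1 FG (real s l) \<Longrightarrow> dom2 MH (chi he s l) = real (hv s) (mp he l)" using chi_typ by blast
lemma chi_cod[simp]: "ok1 FG (real s l) \<Longrightarrow> cod2 MH (chi he s l) = phi1 he (real s l)" using chi_typ by blast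
lemma chi_inv: "ok1 FG (real s l) \<Longrightarrow> M.inv_pair (chi he s l) (psi he s l)" using chi_typ by blast
lemma psi_ok[simp]: "ok1 FG (real s l) \<Longrightarrow> ok2 MH (psi he s l)" using chi_inv M.inv_pair_def by blast
lemma psi_dom[simp]: "ok1 FG (real s l) \<Longrightarrow> dom2 MH (psi he s l) = phi1 he (real s l)" using chi_inv[of s l] M.inv_pair_def by simp
lemma psi_cod[simp]: "ok1 FG (real s l) \<Longrightarrow> cod2 MH (psi he s l) = real (hv s) (mp he l)" using chi_inv[of s l] M.inv_pair_def by simp

end



context mh begin

abbreviation "canM \<equiv> can MH (gnM he) (gcM Gr he)"
abbreviation "nfM \<equiv> nf (gnM he)"

lemma Phi_inv: assumes "F.inv_pair a b" shows "M.inv_pair (X (PhiMap a)) (X (PhiMap b))"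
proof -
  have o: "ok2 FG a" "ok2 FG b" "dom2 FG b = cod2 FG a" "cod2 FG b = dom2 FG a"
    "V b a \<sim> Id (dom2 FG a)" "V a b \<sim> Id (cod2 FG a)" using assms by (auto simp: F.inv_pair_def)
  have t: "ok1 FG (dom2 FG a)" "ok1 FG (cod2 FG a)" using F.tp[OF o(1)] by auto
  have "V (X (PhiMap b)) (X (PhiMap a)) \<cong> X (PhiMap (V b a))" by (rule M.sy[OF r_fcomp]) (use o in auto)
  also have "\<dots> \<cong> X (PhiMap (Id (dom2 FG a)))" by (rule r_resp[OF o(5)])
  also have "\<dots> \<cong> Id (phi1 he (dom2 FG a))" by (rule r_fid[OF t(1)])
  finally have 1: "V (X (PhiMap b)) (X (PhiMap a)) \<cong> Id (phi1 he (dom2 FG a))" .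
  have "V (X (PhiMap a)) (X (PhiMap b)) \<cong> X (PhiMap (V a b))" by (rule M.sy[OF r_fcomp]) (use o in auto)
  also have "\<dots> \<cong> X (PhiMap (Id (cod2 FG a)))" by (rule r_resp[OF o(6)])
  also have "\<dots> \<cong> Id (phi1 he (cod2 FG a))" by (rule r_fid[OF t(2)])
  finally have 2: "V (X (PhiMap a)) (X (PhiMap b)) \<cong> Id (phi1 he (cod2 FG a))" .
  show ?thesis unfolding M.inv_pair_def using 1 2 o by simp
qed

lemma Phi_iso: "F.iso a \<Longrightarrow> M.iso (X (PhiMap a))"
  using Phi_inv M.iso_def F.iso_def by blast

lemma phican_typ: assumes w: "ok1 FG w"
  shows "ok2 MH (phican Gr he w) \<and> dom2 MH (phican Gr he w) = phi1 he w \<and>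
    cod2 MH (phican Gr he w) = real (hv (src1 FG w)) (mp he (nfF w)) \<and> M.iso (phican Gr he w)"
proof -
  have r: "ok1 FG (real (src1 FG w) (nfF w))" using F.can_real[OF w] .
  have i: "M.iso (X (PhiMap (canF Gr w)))" using Phi_iso F.can_iso[OF w] by blast
  have j: "M.iso (psi he (src1 FG w) (nfF w))" using chi_inv[OF r] M.inv_iso by blast
  show ?thesis unfolding phican_def using w r i j by (auto intro!: M.iso_V)
qed

lemma P_edge: assumes e: "e \<in> arcs Gr" shows "phican Gr he (G e) \<cong> Ri (G (Inl (he e)))"
proof -
  let ?s = "gsrc Gr e" and ?E = "G (Inl (he e)) :: ('c, 'd + ('a,'b) w1) w1"
  have s: "?s \<in> verts Gr" using wg e by (auto simp: wf_graph_def)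
  have E: "ok1 MH ?E" "src1 MH ?E = hv ?s" using ghe[OF e] by auto
  have i1: "M.inv_pair (X (PhiMap (R (G e)))) (X (PhiMap (Ri (G e))))"
    by (rule Phi_inv[OF F.inv_R]) (use e in simp)
  have i2: "M.inv_pair (X (PhiC (G e) (U ?s))) (X (PhiCi (G e) (U ?s)))"
    by (rule inv_PhiC) (use e s in auto)
  have i3: "M.inv_pair (H (Id ?E) (X (PhiU ?s))) (H (Id ?E) (X (PhiUi ?s)))"
    by (rule M.inv_H[OF inv_PhiU[OF s] M.inv_Id]) (use E s in auto)
  have i23: "M.inv_pair (V (X (PhiC (G e) (U ?s))) (H (Id ?E) (X (PhiU ?s))))
     (V (H (Id ?E) (X (PhiUi ?s))) (X (PhiCi (G e) (U ?s))))"
    by (rule M.inv_V[OF i3 i2]) (use E s in auto)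
  have i: "M.inv_pair (V (X (PhiMap (R (G e)))) (V (X (PhiC (G e) (U ?s))) (H (Id ?E) (X (PhiU ?s)))))
     (V (V (H (Id ?E) (X (PhiUi ?s))) (X (PhiCi (G e) (U ?s)))) (X (PhiMap (Ri (G e)))))"
    by (rule M.inv_V[OF i23 i1]) (use E s e in auto)
  have k: "V (X (PhiMap (R (G e)))) (V (X (PhiC (G e) (U ?s))) (H (Id ?E) (X (PhiU ?s)))) \<cong> R ?E"
    using r_runit[of "G e"] e by simp
  have "V (V (H (Id ?E) (X (PhiUi ?s))) (X (PhiCi (G e) (U ?s)))) (X (PhiMap (Ri (G e)))) \<cong> Ri ?E"
    by (rule M.inv_unique[OF i M.inv_R k]) (use E in simp)
  thus ?thesis by (simp add: phican_def)
qed

lemma canM_phi1: assumes w: "ok1 FG w" shows "canM (phi1 he w) \<cong> phican Gr he w"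
proof (cases "\<exists>e. w = G e")
  case True
  then obtain e where "w = G e" by blast
  then show ?thesis using P_edge[of e] w by (auto intro: M.sy)
next
  case False
  then have "canM (phi1 he w) = phican Gr he w" by (cases w) auto
  then show ?thesis using phican_typ[OF w] M.rfl by simp
qed

lemma nfM_phi1: "ok1 FG w \<Longrightarrow> nfM (phi1 he w) = mp he (nfF w)"
  by (cases w) auto


lemma key: assumes "ok1 FG (real s1 l1)" "ok1 FG (real s2 l2)" "s1 = tgt1 FG (real s2 l2)"
  shows "V (X (PhiMap (nu s1 s2 l1 l2))) (V (X (PhiC (real s1 l1) (real s2 l2))) (H (chi he s1 l1) (chi he s2 l2)))
    \<cong> V (chi he s2 (l1@l2)) (nu (hv s1) (hv s2) (mp he l1) (mp he l2))"
  using assms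
proof (induction l1)
  case Nil
  have a: "ok1 FG (real s2 l2)" "tgt1 FG (real s2 l2) = s1" "s1 \<in> verts Gr" "s2 \<in> verts Gr"
    using Nil.prems F.real_sv by auto
  note [simp] = a
  let ?Q = "real s2 l2" and ?c2 = "chi he s2 l2" and ?M2 = "real (hv s2) (mp he l2)"
  have "V (X (PhiMap (L ?Q))) (V (X (PhiC (U s1) ?Q)) (H (X (PhiU s1)) ?c2))
     \<cong> V (X (PhiMap (L ?Q))) (V (X (PhiC (U s1) ?Q)) (H (V (X (PhiU s1)) (Id (U (hv s1)))) (V (Id (phi1 he ?Q)) ?c2)))"
    by (rule M.cV2[OF M.cV2[OF M.cH[OF M.sy[OF M.idr] M.sy[OF M.idl]]]]) (auto intro: ghv)
  also have "\<dots> \<cong> V (X (PhiMap (L ?Q))) (V (X (PhiC (U s1) ?Q)) (V (H (X (PhiU s1)) (Id (phi1 he ?Q))) (H (Id (U (hv s1))) ?c2)))"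
    by (rule M.cV2[OF M.cV2[OF M.ich]]) (auto intro: ghv)
  also have "\<dots> \<cong> V (X (PhiMap (L ?Q))) (V (V (X (PhiC (U s1) ?Q)) (H (X (PhiU s1)) (Id (phi1 he ?Q)))) (H (Id (U (hv s1))) ?c2))"
    by (rule M.cV2[OF M.sy[OF M.vas]]) (auto intro: ghv)
  also have "\<dots> \<cong> V (V (X (PhiMap (L ?Q))) (V (X (PhiC (U s1) ?Q)) (H (X (PhiU s1)) (Id (phi1 he ?Q))))) (H (Id (U (hv s1))) ?c2)"
    by (rule M.sy[OF M.vas]) (auto intro: ghv)
  also have "\<dots> \<cong> V (L (phi1 he ?Q)) (H (Id (U (hv s1))) ?c2)"
    by (rule M.cV1) (use r_lunit[of ?Q] in \<open>auto intro: ghv\<close>)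
  also have "\<dots> \<cong> V ?c2 (L ?M2)"
    by (rule M.lnat) auto
  finally show ?case by simp
next
  case (Cons e xs)
  have h: "ok1 FG (real s1 xs)" "e \<in> arcs Gr" "gsrc Gr e = tgt1 FG (real s1 xs)" using Cons.prems by auto
  note ih = Cons.IH[OF h(1) Cons.prems(2,3)]
  have r12: "ok1 FG (real s2 (xs@l2))" "tgt1 FG (real s2 (xs@l2)) = tgt1 FG (real s1 xs)"
    using F.real_app[OF h(1) Cons.prems(2,3)] by auto
  have v: "s1 \<in> verts Gr" "s2 \<in> verts Gr" using Cons.prems F.real_sv by auto
  have ge: "he e \<in> arcs Mg" "gsrc Mg (he e) = hv (gsrc Gr e)" "gtgt Mg (he e) = hv (gtgt Gr e)" using ghe[OF h(2)] by auto
  have rm: "ok1 MH (real (hv s2) (mp he xs @ mp he l2))" "tgt1 MH (real (hv s2) (mp he xs @ mp he l2)) = hv (tgt1 FG (real s1 xs))"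
    using realM[OF r12(1)] r12(2) by auto
  note [simp] = h r12 v ge rm Cons.prems(2) Cons.prems(3)[symmetric]
  let ?Ge = "G e :: ('a,'b) w1" and ?E = "G (Inl (he e)) :: ('c, 'd + ('a,'b) w1) w1"
  let ?P = "real s1 xs" and ?Q = "real s2 l2" and ?R' = "real s2 (xs@l2)"
  let ?cP = "chi he s1 xs" and ?c2 = "chi he s2 l2" and ?c' = "chi he s2 (xs@l2)"
  let ?N = "nu s1 s2 xs l2" and ?nM = "nu (hv s1) (hv s2) (mp he xs) (mp he l2)"
  let ?MP = "real (hv s1) (mp he xs)" and ?M2 = "real (hv s2) (mp he l2)"
  let ?A' = "A ?E ?MP ?M2"
  have "V (X (PhiMap (V (H (Id ?Ge) ?N) (A ?Ge ?P ?Q)))) (V (X (PhiC (C ?Ge ?P) ?Q)) (H (V (X (PhiC ?Ge ?P)) (H (Id ?E) ?cP)) ?c2))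
     \<cong> V (V (X (PhiMap (H (Id ?Ge) ?N))) (X (PhiMap (A ?Ge ?P ?Q)))) (V (X (PhiC (C ?Ge ?P) ?Q)) (H (V (X (PhiC ?Ge ?P)) (H (Id ?E) ?cP)) ?c2))"
    by (rule M.cV1[OF r_fcomp]) auto
  also have "\<dots> \<cong> V (V (X (PhiMap (H (Id ?Ge) ?N))) (X (PhiMap (A ?Ge ?P ?Q)))) (V (X (PhiC (C ?Ge ?P) ?Q)) (H (V (X (PhiC ?Ge ?P)) (H (Id ?E) ?cP)) (V (Id (phi1 he ?Q)) ?c2)))"
    by (rule M.cV2[OF M.cV2[OF M.cH2[OF M.sy[OF M.idl]]]]) auto
  also have "\<dots> \<cong> V (V (X (PhiMap (H (Id ?Ge) ?N))) (X (PhiMap (A ?Ge ?P ?Q)))) (V (X (PhiC (C ?Ge ?P) ?Q)) (V (H (X (PhiC ?Ge ?P)) (Id (phi1 he ?Q))) (H (H (Id ?E) ?cP) ?c2)))"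
    by (rule M.cV2[OF M.cV2[OF M.ich]]) auto
  also have "\<dots> \<cong> V (X (PhiMap (H (Id ?Ge) ?N))) (V (X (PhiMap (A ?Ge ?P ?Q))) (V (X (PhiC (C ?Ge ?P) ?Q)) (V (H (X (PhiC ?Ge ?P)) (Id (phi1 he ?Q))) (H (H (Id ?E) ?cP) ?c2))))"
    by (rule M.vas) auto
  also have "\<dots> \<cong> V (X (PhiMap (H (Id ?Ge) ?N))) (V (X (PhiMap (A ?Ge ?P ?Q))) (V (V (X (PhiC (C ?Ge ?P) ?Q)) (H (X (PhiC ?Ge ?P)) (Id (phi1 he ?Q)))) (H (H (Id ?E) ?cP) ?c2)))"
    by (rule M.cV2[OF M.cV2[OF M.sy[OF M.vas]]]) auto
  also have "\<dots> \<cong> V (X (PhiMap (H (Id ?Ge) ?N))) (V (V (X (PhiMap (A ?Ge ?P ?Q))) (V (X (PhiC (C ?Ge ?P) ?Q)) (H (X (PhiC ?Ge ?P)) (Id (phi1 he ?Q))))) (H (H (Id ?E) ?cP) ?c2))"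
    by (rule M.cV2[OF M.sy[OF M.vas]]) auto
  also have "\<dots> \<cong> V (X (PhiMap (H (Id ?Ge) ?N))) (V (V (X (PhiC ?Ge (C ?P ?Q))) (V (H (Id ?E) (X (PhiC ?P ?Q))) (A ?E (phi1 he ?P) (phi1 he ?Q)))) (H (H (Id ?E) ?cP) ?c2))"
    by (rule M.cV2[OF M.cV1]) (use r_assoc[of ?Ge ?P ?Q] in auto)
  also have "\<dots> \<cong> V (X (PhiMap (H (Id ?Ge) ?N))) (V (X (PhiC ?Ge (C ?P ?Q))) (V (V (H (Id ?E) (X (PhiC ?P ?Q))) (A ?E (phi1 he ?P) (phi1 he ?Q))) (H (H (Id ?E) ?cP) ?c2)))"
    by (rule M.cV2[OF M.vas]) auto
  also have "\<dots> \<cong> V (X (PhiMap (H (Id ?Ge) ?N))) (V (X (PhiC ?Ge (C ?P ?Q))) (V (H (Id ?E) (X (PhiC ?P ?Q))) (V (A ?E (phi1 he ?P) (phi1 he ?Q)) (H (H (Id ?E) ?cP) ?c2))))"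
    by (rule M.cV2[OF M.cV2[OF M.vas]]) auto
  also have "\<dots> \<cong> V (X (PhiMap (H (Id ?Ge) ?N))) (V (X (PhiC ?Ge (C ?P ?Q))) (V (H (Id ?E) (X (PhiC ?P ?Q))) (V (H (Id ?E) (H ?cP ?c2)) ?A')))"
    by (rule M.cV2[OF M.cV2[OF M.cV2[OF M.anat]]]) auto
  also have "\<dots> \<cong> V (V (X (PhiMap (H (Id ?Ge) ?N))) (X (PhiC ?Ge (C ?P ?Q)))) (V (H (Id ?E) (X (PhiC ?P ?Q))) (V (H (Id ?E) (H ?cP ?c2)) ?A'))"
    by (rule M.sy[OF M.vas]) auto
  also have "\<dots> \<cong> V (V (X (PhiC ?Ge ?R')) (H (X (PhiMap (Id ?Ge))) (X (PhiMap ?N)))) (V (H (Id ?E) (X (PhiC ?P ?Q))) (V (H (Id ?E) (H ?cP ?c2)) ?A'))"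
    by (rule M.cV1) (use r_cnat[of "Id ?Ge" ?N] in \<open>auto intro: M.sy\<close>)
  also have "\<dots> \<cong> V (V (X (PhiC ?Ge ?R')) (H (Id ?E) (X (PhiMap ?N)))) (V (H (Id ?E) (X (PhiC ?P ?Q))) (V (H (Id ?E) (H ?cP ?c2)) ?A'))"
    by (rule M.cV1[OF M.cV2[OF M.cH1]]) (use r_fid[of ?Ge] in auto)
  also have "\<dots> \<cong> V (X (PhiC ?Ge ?R')) (V (H (Id ?E) (X (PhiMap ?N))) (V (H (Id ?E) (X (PhiC ?P ?Q))) (V (H (Id ?E) (H ?cP ?c2)) ?A')))"
    by (rule M.vas) auto
  also have "\<dots> \<cong> V (X (PhiC ?Ge ?R')) (V (H (Id ?E) (X (PhiMap ?N))) (V (V (H (Id ?E) (X (PhiC ?P ?Q))) (H (Id ?E) (H ?cP ?c2))) ?A'))"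
    by (rule M.cV2[OF M.cV2[OF M.sy[OF M.vas]]]) auto
  also have "\<dots> \<cong> V (X (PhiC ?Ge ?R')) (V (H (Id ?E) (X (PhiMap ?N))) (V (H (Id ?E) (V (X (PhiC ?P ?Q)) (H ?cP ?c2))) ?A'))"
    by (rule M.cV2[OF M.cV2[OF M.cV1[OF M.sy[OF M.wl]]]]) auto
  also have "\<dots> \<cong> V (X (PhiC ?Ge ?R')) (V (V (H (Id ?E) (X (PhiMap ?N))) (H (Id ?E) (V (X (PhiC ?P ?Q)) (H ?cP ?c2)))) ?A')"
    by (rule M.cV2[OF M.sy[OF M.vas]]) auto
  also have "\<dots> \<cong> V (X (PhiC ?Ge ?R')) (V (H (Id ?E) (V (X (PhiMap ?N)) (V (X (PhiC ?P ?Q)) (H ?cP ?c2)))) ?A')"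
    by (rule M.cV2[OF M.cV1[OF M.sy[OF M.wl]]]) auto
  also have "\<dots> \<cong> V (X (PhiC ?Ge ?R')) (V (H (Id ?E) (V ?c' ?nM)) ?A')"
    by (rule M.cV2[OF M.cV1[OF M.cH2[OF ih]]]) auto
  also have "\<dots> \<cong> V (X (PhiC ?Ge ?R')) (V (V (H (Id ?E) ?c') (H (Id ?E) ?nM)) ?A')"
    by (rule M.cV2[OF M.cV1[OF M.wl]]) auto
  also have "\<dots> \<cong> V (X (PhiC ?Ge ?R')) (V (H (Id ?E) ?c') (V (H (Id ?E) ?nM) ?A'))"
    by (rule M.cV2[OF M.vas]) auto
  also have "\<dots> \<cong> V (V (X (PhiC ?Ge ?R')) (H (Id ?E) ?c')) (V (H (Id ?E) ?nM) ?A')"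
    by (rule M.sy[OF M.vas]) auto
  finally show ?case by simp
qed

end



context mh begin

lemma key_psi: assumes a: "ok1 FG (real s1 l1)" "ok1 FG (real s2 l2)" "s1 = tgt1 FG (real s2 l2)"
  shows "V (psi he s2 (l1@l2)) (V (X (PhiMap (nu s1 s2 l1 l2))) (X (PhiC (real s1 l1) (real s2 l2))))
    \<cong> V (nu (hv s1) (hv s2) (mp he l1) (mp he l2)) (H (psi he s1 l1) (psi he s2 l2))"
proof -
  have r: "ok1 FG (real s2 (l1@l2))" using F.real_app[OF a] by auto
  have s: "s1 \<in> verts Gr" "s2 \<in> verts Gr" using a F.real_sv by auto
  have rt: "tgt1 FG (real s2 (l1@l2)) = tgt1 FG (real s1 l1)" using F.real_app[OF a] by auto
  have rm: "ok1 MH (real (hv s2) (mp he l1 @ mp he l2))" "tgt1 MH (real (hv s2) (mp he l1 @ mp he l2)) = hv (tgt1 FG (real s1 l1))"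
    using realM[OF r] rt by auto
  note [simp] = a(1,2) a(3)[symmetric] r s rm
  have k: "V (X (PhiMap (nu s1 s2 l1 l2))) (V (X (PhiC (real s1 l1) (real s2 l2))) (H (chi he s1 l1) (chi he s2 l2)))
    \<cong> V (chi he s2 (l1@l2)) (nu (hv s1) (hv s2) (mp he l1) (mp he l2))" by (rule key[OF a])
  have k2: "V (V (X (PhiMap (nu s1 s2 l1 l2))) (X (PhiC (real s1 l1) (real s2 l2)))) (H (chi he s1 l1) (chi he s2 l2))
    \<cong> V (chi he s2 (l1@l2)) (nu (hv s1) (hv s2) (mp he l1) (mp he l2))"
    using M.vas[of "X (PhiMap (nu s1 s2 l1 l2))" "X (PhiC (real s1 l1) (real s2 l2))" "H (chi he s1 l1) (chi he s2 l2)"] k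
    by (auto intro: beq.trans)
  have i: "M.inv_pair (H (chi he s1 l1) (chi he s2 l2)) (H (psi he s1 l1) (psi he s2 l2))"
    by (rule M.inv_H[OF chi_inv chi_inv]) auto
  show ?thesis using M.swap[OF chi_inv[of s2 "l1@l2"] i k2] by simp
qed

lemma gx_PhiMap: assumes a: "ok2 FG a"
  shows "V (canM (phi1 he (cod2 FG a))) (X (PhiMap a)) \<cong> canM (phi1 he (dom2 FG a))"
proof -
  let ?c = "cod2 FG a" and ?d = "dom2 FG a"
  have t: "ok1 FG ?d" "ok1 FG ?c" using F.tp[OF a] by auto
  have e1: "src1 FG ?d = src1 FG ?c" using F.tp[OF a] by auto
  have e2: "nfF ?d = nfF ?c" and c: "V (canF Gr ?c) a \<sim> canF Gr ?d" using F.compat[OF a] by auto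
  have pc: "ok2 MH (phican Gr he ?c)" "dom2 MH (phican Gr he ?c) = phi1 he ?c" using phican_typ[OF t(2)] by auto
  have r: "ok1 FG (real (src1 FG ?c) (nfF ?c))" using F.can_real[OF t(2)] .
  have cc: "ok2 FG (canF Gr ?c)" "dom2 FG (canF Gr ?c) = ?c" "cod2 FG (canF Gr ?c) = real (src1 FG ?c) (nfF ?c)"
    using F.can_typ[OF t(2)] by auto
  have "V (canM (phi1 he ?c)) (X (PhiMap a)) \<cong> V (phican Gr he ?c) (X (PhiMap a))"
    by (rule M.cV1[OF canM_phi1[OF t(2)]]) (use a pc M.eqD(3)[OF canM_phi1[OF t(2)]] in simp_all)
  also have "\<dots> = V (V (psi he (src1 FG ?c) (nfF ?c)) (X (PhiMap (canF Gr ?c)))) (X (PhiMap a))" by (simp add: phican_def)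
  also have "\<dots> \<cong> V (psi he (src1 FG ?c) (nfF ?c)) (V (X (PhiMap (canF Gr ?c))) (X (PhiMap a)))"
    by (rule M.vas) (use a r cc in simp)
  also have "\<dots> \<cong> V (psi he (src1 FG ?c) (nfF ?c)) (X (PhiMap (V (canF Gr ?c) a)))"
    by (rule M.cV2[OF M.sy[OF r_fcomp]]) (use a r cc in simp_all)
  also have "\<dots> \<cong> V (psi he (src1 FG ?c) (nfF ?c)) (X (PhiMap (canF Gr ?d)))"
    by (rule M.cV2[OF r_resp[OF c]]) (use a r cc in simp_all)
  also have "\<dots> = phican Gr he ?d" by (simp only: phican_def e1 e2)
  also have "\<dots> \<cong> canM (phi1 he ?d)" by (rule M.sy[OF canM_phi1[OF t(1)]])
  finally show ?thesis .
qed

lemma gx_PhiC: assumes g: "ok1 FG g" and f: "ok1 FG f" and gf: "src1 FG g = tgt1 FG f"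
  shows "V (canM (phi1 he (C g f))) (X (PhiC g f)) \<cong> canM (C (phi1 he g) (phi1 he f))"
proof -
  have rg: "ok1 FG (real (src1 FG g) (nfF g))" "tgt1 FG (real (src1 FG g) (nfF g)) = tgt1 FG g"
    using F.can_real[OF g] F.can_real_tgt[OF g] by auto
  have rf: "ok1 FG (real (src1 FG f) (nfF f))" "tgt1 FG (real (src1 FG f) (nfF f)) = tgt1 FG f"
    using F.can_real[OF f] F.can_real_tgt[OF f] by auto
  have ra: "ok1 FG (real (src1 FG f) (nfF g @ nfF f))" "tgt1 FG (real (src1 FG f) (nfF g @ nfF f)) = tgt1 FG g"
    using F.real_app[OF rg(1) rf(1)] rg rf gf by auto
  have rm: "ok1 MH (real (hv (src1 FG f)) (mp he (nfF g) @ mp he (nfF f)))"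
     "tgt1 MH (real (hv (src1 FG f)) (mp he (nfF g) @ mp he (nfF f))) = hv (tgt1 FG g)"
    using realM[OF ra(1)] ra(2) by auto
  have sv: "src1 FG f \<in> verts Gr" "src1 FG g \<in> verts Gr" using g f fsv by auto
  have kp: "V (psi he (src1 FG f) (nfF g @ nfF f)) (V (X (PhiMap (nu (src1 FG g) (src1 FG f) (nfF g) (nfF f))))
       (X (PhiC (real (src1 FG g) (nfF g)) (real (src1 FG f) (nfF f)))))
    \<cong> V (nu (hv (src1 FG g)) (hv (src1 FG f)) (mp he (nfF g)) (mp he (nfF f))) (H (psi he (src1 FG g) (nfF g)) (psi he (src1 FG f) (nfF f)))"
    by (rule key_psi[OF rg(1) rf(1)]) (use rf gf in simp)
  note [simp] = g f gf[symmetric] rg rf ra rm sv nfM_phi1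
  let ?ps = "psi he (src1 FG f) (nfF g @ nfF f)" and ?nF = "nu (src1 FG g) (src1 FG f) (nfF g) (nfF f)"
  let ?cg = "canF Gr g" and ?cf = "canF Gr f"
  let ?nM = "nu (hv (src1 FG g)) (hv (src1 FG f)) (mp he (nfF g)) (mp he (nfF f))"
  let ?Cr = "X (PhiC (real (src1 FG g) (nfF g)) (real (src1 FG f) (nfF f)))"
  have "canM (phi1 he (C g f)) = phican Gr he (C g f)" by simp
  hence "V (canM (phi1 he (C g f))) (X (PhiC g f)) = V (V ?ps (X (PhiMap (V ?nF (H ?cg ?cf))))) (X (PhiC g f))"
    by (simp add: phican_def)
  also have "\<dots> \<cong> V ?ps (V (X (PhiMap (V ?nF (H ?cg ?cf)))) (X (PhiC g f)))"
    by (rule M.vas) simp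
  also have "\<dots> \<cong> V ?ps (V (V (X (PhiMap ?nF)) (X (PhiMap (H ?cg ?cf)))) (X (PhiC g f)))"
    by (rule M.cV2[OF M.cV1[OF r_fcomp]]) simp_all
  also have "\<dots> \<cong> V ?ps (V (X (PhiMap ?nF)) (V (X (PhiMap (H ?cg ?cf))) (X (PhiC g f))))"
    by (rule M.cV2[OF M.vas]) simp_all
  also have "\<dots> \<cong> V ?ps (V (X (PhiMap ?nF)) (V ?Cr (H (X (PhiMap ?cg)) (X (PhiMap ?cf)))))"
    by (rule M.cV2[OF M.cV2]) (use r_cnat[of ?cg ?cf] in \<open>auto intro: M.sy\<close>)
  also have "\<dots> \<cong> V ?ps (V (V (X (PhiMap ?nF)) ?Cr) (H (X (PhiMap ?cg)) (X (PhiMap ?cf))))"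
    by (rule M.cV2[OF M.sy[OF M.vas]]) simp_all
  also have "\<dots> \<cong> V (V ?ps (V (X (PhiMap ?nF)) ?Cr)) (H (X (PhiMap ?cg)) (X (PhiMap ?cf)))"
    by (rule M.sy[OF M.vas]) simp_all
  also have "\<dots> \<cong> V (V ?nM (H (psi he (src1 FG g) (nfF g)) (psi he (src1 FG f) (nfF f)))) (H (X (PhiMap ?cg)) (X (PhiMap ?cf)))"
    by (rule M.cV1[OF kp]) simp_all
  also have "\<dots> \<cong> V ?nM (V (H (psi he (src1 FG g) (nfF g)) (psi he (src1 FG f) (nfF f))) (H (X (PhiMap ?cg)) (X (PhiMap ?cf))))"
    by (rule M.vas) simp_all
  also have "\<dots> \<cong> V ?nM (H (phican Gr he g) (phican Gr he f))"
    unfolding phican_def by (rule M.cV2[OF M.sy[OF M.ich]]) simp_all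
  also have "\<dots> \<cong> V ?nM (H (canM (phi1 he g)) (canM (phi1 he f)))"
    by (rule M.cV2[OF M.cH[OF M.sy[OF canM_phi1] M.sy[OF canM_phi1]]]) (simp_all add: phican_typ)
  also have "\<dots> = canM (C (phi1 he g) (phi1 he f))" by simp
  finally show ?thesis .
qed

lemma gx_PhiU: assumes v: "v \<in> verts Gr"
  shows "V (canM (phi1 he (U v))) (X (PhiU v)) \<cong> canM (U (hv v))"
proof -
  have [simp]: "hv v \<in> verts Mg" using ghv[OF v] .
  have "V (canM (phi1 he (U v))) (X (PhiU v)) = V (V (X (PhiUi v)) (X (PhiMap (Id (U v))))) (X (PhiU v))"
    by (simp add: phican_def)
  also have "\<dots> \<cong> V (V (X (PhiUi v)) (Id (G (Inr (U v))))) (X (PhiU v))"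
    by (rule M.cV1[OF M.cV2]) (use r_fid[of "U v"] v in simp_all)
  also have "\<dots> \<cong> V (X (PhiUi v)) (X (PhiU v))"
    by (rule M.cV1[OF M.idr]) (use v in simp_all)
  also have "\<dots> \<cong> Id (U (hv v))" by (rule r_uinv1[OF v])
  finally show ?thesis by simp
qed

lemma gx_all: assumes x: "x \<in> sx MH" shows "V (canM (sxc MH x)) (X x) \<cong> canM (sxd MH x)"
proof (cases x)
  case (PhiMap a)
  then show ?thesis using gx_PhiMap x by simp
next
  case (PhiC g f)
  then show ?thesis using gx_PhiC x by simp
next
  case (PhiCi g f)
  then have h: "ok1 FG g" "ok1 FG f" "src1 FG g = tgt1 FG f" using x by auto
  have "V (canM (C (phi1 he g) (phi1 he f))) (X (PhiCi g f)) \<cong> canM (phi1 he (C g f))"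
    by (rule M.move_inv[OF inv_PhiC[OF h] gx_PhiC[OF h]])
  then show ?thesis using PhiCi by simp
next
  case (PhiU v)
  then show ?thesis using gx_PhiU x by simp
next
  case (PhiUi v)
  then have h: "v \<in> verts Gr" using x by auto
  have "V (canM (U (hv v))) (X (PhiUi v)) \<cong> canM (phi1 he (U v))"
    by (rule M.move_inv[OF inv_PhiU[OF h] gx_PhiU[OF h]])
  then show ?thesis using PhiUi by simp
qed

lemma gxnf_all: assumes x: "x \<in> sx MH" shows "nfM (sxd MH x) = nfM (sxc MH x)"
proof (cases x)
  case (PhiMap a)
  then have a: "ok2 FG a" using x by auto
  have t: "ok1 FG (dom2 FG a)" "ok1 FG (cod2 FG a)" using F.tp[OF a] by auto
  have e: "nfF (dom2 FG a) = nfF (cod2 FG a)" using F.compat[OF a] by auto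
  show ?thesis using PhiMap by (simp add: nfM_phi1[OF t(1)] nfM_phi1[OF t(2)] e)
qed (use x in \<open>auto simp: nfM_phi1\<close>)

lemma gc_all: assumes g: "g \<in> sg MH"
  shows "ok2 MH (gcM Gr he g) \<and> dom2 MH (gcM Gr he g) = G g \<and>
     cod2 MH (gcM Gr he g) = real (sgs MH g) (gnM he g) \<and> M.iso (gcM Gr he g)"
proof (cases g)
  case (Inl m)
  then show ?thesis using g wm M.inv_R[of "G (Inl m)"] M.inv_iso(2) by (auto simp: wf_graph_def)
next
  case (Inr w)
  then have w: "ok1 FG w" "\<forall>e. w \<noteq> G e" using g by auto
  have "phi1 he w = G (Inr w)" using w by (cases w) auto
  then show ?thesis using Inr phican_typ[OF w(1)] by simp
qed

sublocale M: coh MH Rm "gnM he" "gcM Gr he"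
  by unfold_locales (auto dest: gc_all intro: gxnf_all[simplified] gx_all[simplified])

lemma thinM: "hom_thin MH Rm" by (rule M.thin)

end

theorem mainTheorem11:
  fixes Gr :: "('a,'b) graph" and Mg :: "('c,'d) graph"
    and hv :: "'a \<Rightarrow> 'c" and he :: "'b \<Rightarrow> 'd"
  assumes "wf_graph Gr" and "wf_graph Mg" and "graph_hom Gr Mg hv he"
  shows "hom_thin (MS Gr Mg hv he) (mrel Gr hv he)"
proof -
  interpret mh Gr Mg hv he using assms by unfold_locales
  show ?thesis by (rule thinM)
qed



end
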